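(* Let $b>0$, $c>0$, $k,\sigma\in\mathbb R$, $T>0$, let $f\in L^2(0,T;L^2(\Omega))$, and let the coefficients $\alpha_h,\boldsymbol\beta_h$ satisfy Assumption (K1). Then the solution $(\psi_h,\boldsymbol v_h)\in H^2(0,T;\Psi_h)\times H^2(0,T;\boldsymbol V_h)$ of the linearized semi-discrete problem (LK) with initial data $\psi_{0h},\psi_{1h}\in\Psi_h$ satisfies $$E[\psi_h,\boldsymbol v_h](t)\le C\Big(E[\psi_h,\boldsymbol v_h](0)+\int_0^t\|f(s)\|_{L^2}^2\,ds\Big),\qquad t\in[0,T],$$ where $C>0$ is independent of $h$ (it may depend on $T,b,c,k,\sigma,\underline\alpha,\overline\alpha,\overline\beta$).
   Context: Setting: $\Omega\subset\mathbb R^d$, $d\in\{2,3\}$, is a bounded convex polygonal/polyhedral domain with a regular quasi-uniform family of meshes of size $h\in(0,1)$, and $\Psi_h\times\boldsymbol V_h\subset L^2(\Omega)\times\boldsymbol H(\mathrm{div};\Omega)$ is a pair of finite-dimensional mixed finite element spaces (RT, BDFM, BDM or BDDF type) with $\nabla\cdot\boldsymbol V_h\subseteq\Psi_h$. $(\cdot,\cdot)$ is the $L^2(\Omega)$ inner product. Linearized problem (LK): given coefficients $\alpha_h:\Omega\times(0,T)\to\mathbb R$ and $\boldsymbol\beta_h:\Omega\times(0,T)\to\mathbb R^d$, find $(\psi_h,\boldsymbol v_h):[0,T]\to\Psi_h\times\boldsymbol V_h$ such that for a.e. $t$ and all $(\phi_h,\boldsymbol w_h)\in\Psi_h\times\boldsymbol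 V_h$: $((1+2k\alpha_h)\psi_{htt},\phi_h)-(c^2\nabla\cdot\boldsymbol v_h+b\nabla\cdot\boldsymbol v_{ht},\phi_h)+2\sigma(\boldsymbol\beta_h\cdot\boldsymbol v_{ht},\phi_h)=(f,\phi_h)$ and $(\boldsymbol v_h,\boldsymbol w_h)+(\psi_h,\nabla\cdot\boldsymbol w_h)=0$, with $\psi_h(0)=\psi_{0h}$, $\psi_{ht}(0)=\psi_{1h}$. The initial velocities $\boldsymbol v_h(0)=\boldsymbol v_{0h}$, $\boldsymbol v_{ht}(0)=\boldsymbol v_{1h}$ are the elements of $\boldsymbol V_h$ with $(\boldsymbol v_{ih},\boldsymbol w_h)+(\psi_{ih},\nabla\cdot\boldsymbol w_h)=0$ for all $\boldsymbol w_h\in\boldsymbol V_h$, $i=0,1$. Assumption (K1): there exist $\underline\alpha,\overline\alpha,\overline\beta>0$ independent of $h$ with $0<1-2|k|\underline\alpha\le 1+2k\alpha_h(x,t)\le1+2|k|\overline\alpha$ on $\Omega\times(0,T)$ and $\|\boldsymbol\beta_h\|_{L^\infty(0,T;L^\infty(\Omega))}\le\overline\beta$. Energy: $E[\psi,\boldsymbol v](t)=\|\psi(t)\|_{L^2}^2+\|\psi_t(t)\|_{L^2}^2+\int_0^t\|\psi_{tt}(s)\|_{L^2}^2ds+\|\boldsymbol v(t)\|_{L^2}^2+\|\boldsymbol v_t(t)\|_{L^2}^2$. *)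

theory Defs
  imports "HOL-Analysis.Analysis"
begin

definition sq_int :: "(real^'d) set \<Rightarrow> (real^'d \<Rightarrow> 'b::real_normed_vector) \<Rightarrow> bool" where
  "sq_int \<Omega> u \<longleftrightarrow> u \<in> borel_measurable (lebesgue_on \<Omega>)
      \<and> integrable (lebesgue_on \<Omega>) (\<lambda>x. (norm (u x))^2)"

definition l2ip :: "(real^'d) set \<Rightarrow> (real^'d \<Rightarrow> 'b::real_inner) \<Rightarrow> (real^'d \<Rightarrow> 'b) \<Rightarrow> real" where
  "l2ip \<Omega> u w = integral\<^sup>L (lebesgue_on \<Omega>) (\<lambda>x. inner (u x) (w x))"

definition test_fun :: "(real^'d) set \<Rightarrow> (real^'d \<Rightarrow> real) \<Rightarrow> (real^'d \<Rightarrow> real^'d) \<Rightarrow> bool" where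
  "test_fun \<Omega> \<phi> G \<longleftrightarrow> (\<forall>x. (\<phi> has_derivative (\<lambda>y. inner (G x) y)) (at x))
      \<and> continuous_on UNIV G
      \<and> compact (closure {x. \<phi> x \<noteq> 0}) \<and> closure {x. \<phi> x \<noteq> 0} \<subseteq> \<Omega>"

definition has_weak_div :: "(real^'d) set \<Rightarrow> (real^'d \<Rightarrow> real^'d) \<Rightarrow> (real^'d \<Rightarrow> real) \<Rightarrow> bool" where
  "has_weak_div \<Omega> v g \<longleftrightarrow> sq_int \<Omega> g \<and>
     (\<forall>\<phi> G. test_fun \<Omega> \<phi> G \<longrightarrow>
        integral\<^sup>L (lebesgue_on \<Omega>) (\<lambda>x. inner (v x) (G x))
          = - integral\<^sup>L (lebesgue_on \<Omega>) (\<lambda>x. g x * \<phi> x))"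

definition Hdiv :: "(real^'d) set \<Rightarrow> (real^'d \<Rightarrow> real^'d) \<Rightarrow> bool" where
  "Hdiv \<Omega> v \<longleftrightarrow> sq_int \<Omega> v \<and> (\<exists>g. has_weak_div \<Omega> v g)"

text \<open>The weak divergence (unique up to null sets; a representative is chosen).\<close>
definition wdiv :: "(real^'d) set \<Rightarrow> (real^'d \<Rightarrow> real^'d) \<Rightarrow> (real^'d \<Rightarrow> real)" where
  "wdiv \<Omega> v = (SOME g. has_weak_div \<Omega> v g)"

text \<open>Finite-dimensional spaces: spans of finite lists of functions.\<close>
definition lin_comb :: "('a \<Rightarrow> 'b::real_vector) list \<Rightarrow> (nat \<Rightarrow> real) \<Rightarrow> 'a \<Rightarrow> 'b" where
  "lin_comb B c = (\<lambda>x. \<Sum>i<length B. c i *\<^sub>R (B ! i) x)"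

definition fspan :: "('a \<Rightarrow> 'b::real_vector) list \<Rightarrow> ('a \<Rightarrow> 'b) set" where
  "fspan B = {lin_comb B c | c. True}"

definition H2_scalar :: "real \<Rightarrow> (real \<Rightarrow> real) \<Rightarrow> (real \<Rightarrow> real) \<Rightarrow> (real \<Rightarrow> real) \<Rightarrow> bool" where
  "H2_scalar T a a1 a2 \<longleftrightarrow>
     a2 \<in> borel_measurable (lebesgue_on {0..T})
     \<and> integrable (lebesgue_on {0..T}) (\<lambda>t. (a2 t)^2)
     \<and> (\<forall>t\<in>{0..T}. a1 t = a1 0 + integral\<^sup>L (lebesgue_on {0..t}) a2)
     \<and> (\<forall>t\<in>{0..T}. a t = a 0 + integral\<^sup>L (lebesgue_on {0..t}) a1)"

definition H2_time :: "('a \<Rightarrow> 'b::real_vector) list \<Rightarrow> real \<Rightarrow> (real \<Rightarrow> 'a \<Rightarrow> 'b)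
    \<Rightarrow> (real \<Rightarrow> 'a \<Rightarrow> 'b) \<Rightarrow> (real \<Rightarrow> 'a \<Rightarrow> 'b) \<Rightarrow> bool" where
  "H2_time B T u u1 u2 \<longleftrightarrow> (\<exists>a a1 a2.
     (\<forall>i<length B. H2_scalar T (a i) (a1 i) (a2 i))
     \<and> (\<forall>t\<in>{0..T}. u t = lin_comb B (\<lambda>i. a i t)
                  \<and> u1 t = lin_comb B (\<lambda>i. a1 i t)
                  \<and> u2 t = lin_comb B (\<lambda>i. a2 i t)))"

definition energy :: "(real^'d) set \<Rightarrow> (real \<Rightarrow> real^'d \<Rightarrow> real) \<Rightarrow> (real \<Rightarrow> real^'d \<Rightarrow> real)
    \<Rightarrow> (real \<Rightarrow> real^'d \<Rightarrow> real) \<Rightarrow> (real \<Rightarrow> real^'d \<Rightarrow> real^'d) \<Rightarrow> (real \<Rightarrow> real^'d \<Rightarrow> real^'d)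
    \<Rightarrow> real \<Rightarrow> real" where
  "energy \<Omega> \<psi> \<psi>t \<psi>tt v vt t =
     l2ip \<Omega> (\<psi> t) (\<psi> t) + l2ip \<Omega> (\<psi>t t) (\<psi>t t)
     + integral\<^sup>L (lebesgue_on {0..t}) (\<lambda>s. l2ip \<Omega> (\<psi>tt s) (\<psi>tt s))
     + l2ip \<Omega> (v t) (v t) + l2ip \<Omega> (vt t) (vt t)"

end

theory Submission
  imports Defs
begin


lemma sigma_finite_lebesgue: "sigma_finite_measure (lebesgue :: 'a::euclidean_space measure)"
proof -
  obtain A :: "'a set set" where A: "countable A" "A \<subseteq> sets lborel" "\<Union>A = space lborel"
       "\<forall>a\<in>A. emeasure lborel a \<noteq> \<infinity>"
    using sigma_finite_measure.sigma_finite_countable[OF sigma_finite_lborel] by blast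
  have "A \<subseteq> sets lebesgue" using A(2) by auto
  moreover have "\<forall>a\<in>A. emeasure lebesgue a \<noteq> \<infinity>" using A(2,4) by auto
  ultimately show ?thesis unfolding sigma_finite_measure_def using A(1,3) by (intro exI[of _ A]) auto
qed

interpretation lebpair: pair_sigma_finite "lebesgue::real measure" "lebesgue::real measure"
  by (simp add: pair_sigma_finite_def sigma_finite_lebesgue)

lemma id_leb_borel[measurable]: "(\<lambda>x::'a::euclidean_space. x) \<in> borel_measurable lebesgue"
  by (rule measurable_completion) simp
lemma fst_leb: "(\<lambda>z::real\<times>real. fst z) \<in> borel_measurable (lebesgue \<Otimes>\<^sub>M lebesgue)"
  using measurable_compose[OF measurable_fst id_leb_borel] by simp
lemma snd_leb: "(\<lambda>z::real\<times>real. snd z) \<in> borel_measurable (lebesgue \<Otimes>\<^sub>M lebesgue)"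
  using measurable_compose[OF measurable_snd id_leb_borel] by simp

definition ac :: "real \<Rightarrow> (real \<Rightarrow> real) \<Rightarrow> (real \<Rightarrow> real) \<Rightarrow> bool" where
  "ac T p p' \<longleftrightarrow> integrable (lebesgue_on {0..T}) p'
     \<and> (\<forall>t\<in>{0..T}. p t = p 0 + integral\<^sup>L (lebesgue_on {0..t}) p')"

lemma ac_int: "ac T p p' \<Longrightarrow> integrable (lebesgue_on {0..T}) p'"
  unfolding ac_def by (elim conjE)

lemma ac_int_sub: "ac T p p' \<Longrightarrow> t \<in> {0..T} \<Longrightarrow> integrable (lebesgue_on {0..t}) p'"
  unfolding ac_def by (elim conjE, rule Equivalence_Lebesgue_Henstock_Integration.integrable_subinterval) auto

lemma ac_eq: assumes "ac T p p'" "t \<in> {0..T}" shows "p t = p 0 + integral\<^sup>L (lebesgue_on {0..t}) p'"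
  by (rule bspec[OF conjunct2[OF assms(1)[unfolded ac_def]] assms(2)])

lemma ac_cont: assumes "ac T p p'" shows "continuous_on {0..T} p"
proof -
  have "continuous_on {0..T} (\<lambda>t. integral\<^sup>L (lebesgue_on {0..t}) p')"
    by (rule indefinite_integral_continuous_real[OF conjunct1[OF assms[unfolded ac_def]]])
  then have "continuous_on {0..T} (\<lambda>t. p 0 + integral\<^sup>L (lebesgue_on {0..t}) p')"
    by (intro continuous_on_add continuous_on_const)
  then show ?thesis
    by (rule continuous_on_eq) (rule ac_eq[OF assms, symmetric])
qed

lemma ac_add: assumes "ac T p p'" "ac T q q'"
  shows "ac T (\<lambda>t. p t + q t) (\<lambda>t. p' t + q' t)"
  unfolding ac_def
proof safe
  show "integrable (lebesgue_on {0..T}) (\<lambda>t. p' t + q' t)"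
    using ac_int[OF assms(1)] ac_int[OF assms(2)] by simp
  fix t assume t: "t \<in> {0..T}"
  have "integral\<^sup>L (lebesgue_on {0..t}) (\<lambda>t. p' t + q' t)
        = integral\<^sup>L (lebesgue_on {0..t}) p' + integral\<^sup>L (lebesgue_on {0..t}) q'"
    using ac_int_sub[OF assms(1) t] ac_int_sub[OF assms(2) t] by (rule Bochner_Integration.integral_add)
  then show "p t + q t = p 0 + q 0 + integral\<^sup>L (lebesgue_on {0..t}) (\<lambda>t. p' t + q' t)"
    using ac_eq[OF assms(1) t] ac_eq[OF assms(2) t] by simp
qed

lemma ac_cmult: assumes "ac T p p'"
  shows "ac T (\<lambda>t. c * p t) (\<lambda>t. c * p' t)"
  unfolding ac_def
proof safe
  show "integrable (lebesgue_on {0..T}) (\<lambda>t. c * p' t)" using ac_int[OF assms] by simp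
  fix t assume t: "t \<in> {0..T}"
  show "c * p t = c * p 0 + integral\<^sup>L (lebesgue_on {0..t}) (\<lambda>t. c * p' t)"
    using ac_eq[OF assms t] by (simp add: distrib_left)
qed

lemma ac_const: "ac T (\<lambda>t. c) (\<lambda>t. 0)"
  by (auto simp: ac_def)

lemma ac_sum: assumes "finite I" "\<And>i. i \<in> I \<Longrightarrow> ac T (p i) (p' i)"
  shows "ac T (\<lambda>t. \<Sum>i\<in>I. p i t) (\<lambda>t. \<Sum>i\<in>I. p' i t)"
  using assms
proof (induction I rule: finite_induct)
  case empty then show ?case using ac_const[of T 0] by simp
next
  case (insert x F)
  have "ac T (\<lambda>t. p x t + (\<Sum>i\<in>F. p i t)) (\<lambda>t. p' x t + (\<Sum>i\<in>F. p' i t))"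
    using insert by (intro ac_add) auto
  then show ?case using insert(1,2) by (simp add: sum.insert)
qed

lemma ac_cong: assumes "ac T p p'" "\<And>t. t \<in> {0..T} \<Longrightarrow> p t = q t" "\<And>t. t \<in> {0..T} \<Longrightarrow> p' t = q' t"
  "0 \<le> T"
  shows "ac T q q'"
proof -
  have 1: "integrable (lebesgue_on {0..T}) q'"
  proof -
    have "integrable (lebesgue_on {0..T}) p'" using ac_int[OF assms(1)] .
    moreover have "integrable (lebesgue_on {0..T}) p' = integrable (lebesgue_on {0..T}) q'"
      by (rule Bochner_Integration.integrable_cong) (auto simp: assms(3))
    ultimately show ?thesis by simp
  qed
  have ie: "integral\<^sup>L (lebesgue_on {0..t}) p' = integral\<^sup>L (lebesgue_on {0..t}) q'" if "t \<in> {0..T}" for t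
    by (rule Bochner_Integration.integral_cong) (use that assms(3) in auto)
  show ?thesis unfolding ac_def
  proof (intro conjI ballI)
    show "integrable (lebesgue_on {0..T}) q'" by (rule 1)
    fix t assume that: "t \<in> {0..T}"
    have e: "integral\<^sup>L (lebesgue_on {0..t}) p' = integral\<^sup>L (lebesgue_on {0..t}) q'"
      by (rule ie[OF that])
    have "q t = p t" using assms(2) that by simp
    also have "\<dots> = p 0 + integral\<^sup>L (lebesgue_on {0..t}) p'" using ac_eq[OF assms(1) that] .
    also have "p 0 = q 0" using assms(2)[of 0] assms(4) by simp
    finally show "q t = q 0 + integral\<^sup>L (lebesgue_on {0..t}) q'" by (simp only: e)
  qed
qed

lemma integrable_mult_cont:
  fixes f g :: "real \<Rightarrow> real"
  assumes f: "integrable (lebesgue_on {a..b}) f" and g: "continuous_on {a..b} g"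
  shows "integrable (lebesgue_on {a..b}) (\<lambda>x. f x * g x)"
proof -
  obtain B where B: "\<And>x. x \<in> {a..b} \<Longrightarrow> norm (g x) \<le> B"
    using compact_imp_bounded[OF compact_continuous_image[OF g compact_Icc]]
    unfolding bounded_iff by (auto) (metis atLeastAtMost_iff)
  have gm: "g \<in> borel_measurable (lebesgue_on {a..b})"
    by (rule continuous_imp_measurable_on_sets_lebesgue[OF g]) auto
  have fm: "f \<in> borel_measurable (lebesgue_on {a..b})" using f by auto
  show ?thesis
  proof (rule Bochner_Integration.integrable_bound[where f="\<lambda>x. B * f x"])
    show "integrable (lebesgue_on {a..b}) (\<lambda>x. B * f x)" using f by simp
    show "(\<lambda>x. f x * g x) \<in> borel_measurable (lebesgue_on {a..b})" using fm gm by measurable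
    show "AE x in lebesgue_on {a..b}. norm (f x * g x) \<le> norm (B * f x)"
    proof (rule AE_I2)
      fix x assume "x \<in> space (lebesgue_on {a..b})"
      then have "x \<in> {a..b}" by simp
      then have "\<bar>g x\<bar> \<le> B" using B by simp
      then show "norm (f x * g x) \<le> norm (B * f x)"
        by (simp add: abs_mult) (metis abs_ge_zero mult.commute mult_right_mono)
    qed
  qed
qed


lemma leb_on_integral: fixes f :: "real \<Rightarrow> real" shows "integral\<^sup>L (lebesgue_on {a..b::real}) f = integral\<^sup>L lebesgue (\<lambda>x. indicator {a..b} x * f x)"
  using integral_restrict_space[of "{a..b}" lebesgue f] by simp

lemma leb_on_integrable: fixes f :: "real \<Rightarrow> real" shows "integrable (lebesgue_on {a..b::real}) f \<longleftrightarrow> integrable lebesgue (\<lambda>x. indicator {a..b} x * f x)"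
  using integrable_restrict_space[of "{a..b}" lebesgue f] by simp

lemma AE_leb_ne: "AE x in (lebesgue::real measure). x \<noteq> c"
  by (rule AE_completion) (rule AE_lborel_singleton)

lemma ac_prod_key:
  assumes P: "ac T p p'" and Q: "ac T q q'" and t: "t \<in> {0..T}"
  shows "(p t - p 0) * (q t - q 0) = integral\<^sup>L (lebesgue_on {0..t}) (\<lambda>s. p' s * (q s - q 0))
          + integral\<^sup>L (lebesgue_on {0..t}) (\<lambda>s. q' s * (p s - p 0))"
proof -
  define u where "u s = indicator {0..t} s * p' s" for s
  define w where "w s = indicator {0..t} s * q' s" for s
  have iu: "integrable lebesgue u" unfolding u_def using ac_int_sub[OF P t] leb_on_integrable by blast
  have iw: "integrable lebesgue w" unfolding w_def using ac_int_sub[OF Q t] leb_on_integrable by blast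
  have mu[measurable]: "u \<in> borel_measurable lebesgue" using iu by auto
  have mw[measurable]: "w \<in> borel_measurable lebesgue" using iw by auto
  have su: "integral\<^sup>L lebesgue u = p t - p 0"
    using ac_eq[OF P t] unfolding u_def by (simp add: leb_on_integral)
  have sw: "integral\<^sup>L lebesgue w = q t - q 0"
    using ac_eq[OF Q t] unfolding w_def by (simp add: leb_on_integral)
  have mH[measurable]: "(\<lambda>(s,r). u s * w r) \<in> borel_measurable (lebesgue \<Otimes>\<^sub>M lebesgue)"
    by measurable
  have iH: "integrable (lebesgue \<Otimes>\<^sub>M lebesgue) (\<lambda>(s,r). u s * w r)"
  proof (rule lebpair.Fubini_integrable)
    have "(\<lambda>s. \<integral>r. norm ((\<lambda>(s,r). u s * w r) (s, r)) \<partial>lebesgue) = (\<lambda>s. norm (u s) * \<integral>r. norm (w r) \<partial>lebesgue)"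
      by (simp add: abs_mult)
    moreover have "integrable lebesgue (\<lambda>s. norm (u s) * \<integral>r. norm (w r) \<partial>lebesgue)"
      using iu by (intro integrable_mult_left) auto
    ultimately show "integrable lebesgue (\<lambda>s. \<integral>r. norm ((\<lambda>(s,r). u s * w r) (s, r)) \<partial>lebesgue)" by simp
    show "AE s in lebesgue. integrable lebesgue (\<lambda>r. (\<lambda>(s,r). u s * w r) (s, r))"
      using iw by (auto intro!: integrable_mult_right)
  qed (rule mH)
  define H1 where "H1 s r = (if r \<le> s then u s * w r else 0)" for s r
  define H2 where "H2 s r = (if s < r then u s * w r else 0)" for s r
  have pred1: "Measurable.pred (lebesgue \<Otimes>\<^sub>M lebesgue) (\<lambda>z::real\<times>real. snd z \<le> fst z)"
    using fst_leb snd_leb by measurable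
  have pred2: "Measurable.pred (lebesgue \<Otimes>\<^sub>M lebesgue) (\<lambda>z::real\<times>real. fst z < snd z)"
    using fst_leb snd_leb by measurable
  have iH1: "integrable (lebesgue \<Otimes>\<^sub>M lebesgue) (case_prod H1)"
  proof (rule Bochner_Integration.integrable_bound[OF iH])
    have "case_prod H1 = (\<lambda>z. if snd z \<le> fst z then (\<lambda>(s,r). u s * w r) z else 0)"
      by (auto simp: H1_def fun_eq_iff)
    then show "case_prod H1 \<in> borel_measurable (lebesgue \<Otimes>\<^sub>M lebesgue)"
      using pred1 mH by simp
    show "AE x in lebesgue \<Otimes>\<^sub>M lebesgue. norm (case_prod H1 x) \<le> norm ((\<lambda>(s,r). u s * w r) x)"
      by (auto simp: H1_def split: prod.splits)
  qed
  have iH2: "integrable (lebesgue \<Otimes>\<^sub>M lebesgue) (case_prod H2)"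
  proof (rule Bochner_Integration.integrable_bound[OF iH])
    have "case_prod H2 = (\<lambda>z. if fst z < snd z then (\<lambda>(s,r). u s * w r) z else 0)"
      by (auto simp: H2_def fun_eq_iff)
    then show "case_prod H2 \<in> borel_measurable (lebesgue \<Otimes>\<^sub>M lebesgue)"
      using pred2 mH by simp
    show "AE x in lebesgue \<Otimes>\<^sub>M lebesgue. norm (case_prod H2 x) \<le> norm ((\<lambda>(s,r). u s * w r) x)"
      by (auto simp: H2_def split: prod.splits)
  qed
  have "integral\<^sup>L (lebesgue \<Otimes>\<^sub>M lebesgue) (\<lambda>(s,r). u s * w r)
        = integral\<^sup>L (lebesgue \<Otimes>\<^sub>M lebesgue) (\<lambda>z. case_prod H1 z + case_prod H2 z)"
    by (rule Bochner_Integration.integral_cong) (auto simp: H1_def H2_def)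
  also have "\<dots> = integral\<^sup>L (lebesgue \<Otimes>\<^sub>M lebesgue) (case_prod H1) + integral\<^sup>L (lebesgue \<Otimes>\<^sub>M lebesgue) (case_prod H2)"
    by (rule Bochner_Integration.integral_add[OF iH1 iH2])
  finally have split: "integral\<^sup>L (lebesgue \<Otimes>\<^sub>M lebesgue) (\<lambda>(s,r). u s * w r) =
     integral\<^sup>L (lebesgue \<Otimes>\<^sub>M lebesgue) (case_prod H1) + integral\<^sup>L (lebesgue \<Otimes>\<^sub>M lebesgue) (case_prod H2)" .
  have "integral\<^sup>L (lebesgue \<Otimes>\<^sub>M lebesgue) (\<lambda>(s,r). u s * w r) = (\<integral>s. (\<integral>r. u s * w r \<partial>lebesgue) \<partial>lebesgue)"
    using lebpair.integral_fst[of "\<lambda>s r. u s * w r"] iH by simp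
  also have "\<dots> = (p t - p 0) * (q t - q 0)" using su sw by simp
  finally have LHS: "integral\<^sup>L (lebesgue \<Otimes>\<^sub>M lebesgue) (\<lambda>(s,r). u s * w r) = (p t - p 0) * (q t - q 0)" .
  have in1: "(\<integral>r. H1 s r \<partial>lebesgue) = u s * (q s - q 0)" for s
  proof (cases "s \<in> {0..t}")
    case False
    then have u0: "u s = 0" by (simp add: u_def)
    then have "(\<lambda>r. H1 s r) = (\<lambda>r. 0)" by (intro ext) (simp add: H1_def)
    then show ?thesis using u0 by simp
  next
    case True
    have "(\<integral>r. H1 s r \<partial>lebesgue) = (\<integral>r. u s * (indicator {0..s} r * q' r) \<partial>lebesgue)"
      using True by (intro Bochner_Integration.integral_cong) (auto simp: H1_def w_def indicator_def)
    also have "\<dots> = u s * (q s - q 0)"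
      using ac_eq[OF Q, of s] True t by (simp add: leb_on_integral)
    finally show ?thesis .
  qed
  have in2: "(\<integral>s. H2 s r \<partial>lebesgue) = w r * (p r - p 0)" for r
  proof (cases "r \<in> {0..t}")
    case False
    then have w0: "w r = 0" by (simp add: w_def)
    then have "(\<lambda>s. H2 s r) = (\<lambda>s. 0)" by (intro ext) (simp add: H2_def)
    then show ?thesis using w0 by simp
  next
    case True
    have "(\<integral>s. H2 s r \<partial>lebesgue) = (\<integral>s. w r * (indicator {0..r} s * u s) \<partial>lebesgue)"
    proof (rule integral_cong_AE)
      show "AE s in lebesgue. H2 s r = w r * (indicator {0..r} s * u s)"
        using AE_leb_ne[of r] by eventually_elim (use True in \<open>auto simp: H2_def u_def indicator_def\<close>)
      show "(\<lambda>s. H2 s r) \<in> borel_measurable lebesgue" unfolding H2_def by measurable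
      show "(\<lambda>s. w r * (indicator {0..r} s * u s)) \<in> borel_measurable lebesgue" by measurable
    qed
    also have "\<dots> = (\<integral>s. w r * (indicator {0..r} s * p' s) \<partial>lebesgue)"
      by (rule Bochner_Integration.integral_cong) (use True in \<open>auto simp: u_def indicator_def\<close>)
    also have "\<dots> = w r * (p r - p 0)"
      using ac_eq[OF P, of r] True t by (simp add: leb_on_integral)
    finally show ?thesis .
  qed
  have I1: "integral\<^sup>L (lebesgue \<Otimes>\<^sub>M lebesgue) (case_prod H1) = integral\<^sup>L (lebesgue_on {0..t}) (\<lambda>s. p' s * (q s - q 0))"
  proof -
    have "integral\<^sup>L (lebesgue \<Otimes>\<^sub>M lebesgue) (case_prod H1) = (\<integral>s. (\<integral>r. H1 s r \<partial>lebesgue) \<partial>lebesgue)"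
      using lebpair.integral_fst[of H1] iH1 by simp
    also have "\<dots> = (\<integral>s. u s * (q s - q 0) \<partial>lebesgue)" by (simp add: in1)
    also have "\<dots> = integral\<^sup>L (lebesgue_on {0..t}) (\<lambda>s. p' s * (q s - q 0))"
      by (simp add: leb_on_integral u_def mult.assoc)
    finally show ?thesis .
  qed
  have I2: "integral\<^sup>L (lebesgue \<Otimes>\<^sub>M lebesgue) (case_prod H2) = integral\<^sup>L (lebesgue_on {0..t}) (\<lambda>s. q' s * (p s - p 0))"
  proof -
    have "integral\<^sup>L (lebesgue \<Otimes>\<^sub>M lebesgue) (case_prod H2) = (\<integral>r. (\<integral>s. H2 s r \<partial>lebesgue) \<partial>lebesgue)"
      using lebpair.integral_snd[of H2] iH2 by simp
    also have "\<dots> = (\<integral>r. w r * (p r - p 0) \<partial>lebesgue)" by (simp add: in2)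
    also have "\<dots> = integral\<^sup>L (lebesgue_on {0..t}) (\<lambda>s. q' s * (p s - p 0))"
      by (simp add: leb_on_integral w_def mult.assoc)
    finally show ?thesis .
  qed
  show ?thesis using LHS split I1 I2 by simp
qed

lemma ac_mult:
  assumes P: "ac T p p'" and Q: "ac T q q'"
  shows "ac T (\<lambda>t. p t * q t) (\<lambda>t. p' t * q t + p t * q' t)"
proof -
  have cp: "continuous_on {0..T} p" by (rule ac_cont[OF P])
  have cq: "continuous_on {0..T} q" by (rule ac_cont[OF Q])
  have i1: "integrable (lebesgue_on {0..T}) (\<lambda>t. p' t * q t)"
    by (rule integrable_mult_cont[OF ac_int[OF P] cq])
  have i2: "integrable (lebesgue_on {0..T}) (\<lambda>t. p t * q' t)"
    using integrable_mult_cont[OF ac_int[OF Q] cp] by (simp add: mult.commute)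
  show ?thesis unfolding ac_def
  proof (intro conjI ballI)
    show "integrable (lebesgue_on {0..T}) (\<lambda>t. p' t * q t + p t * q' t)"
      using i1 i2 by (rule Bochner_Integration.integrable_add)
    fix t assume t: "t \<in> {0..T}"
    have sub: "{0..t} \<subseteq> {0..T}" using t by auto
    have i1t: "integrable (lebesgue_on {0..t}) (\<lambda>t. p' t * q t)"
      using i1 sub by (rule Equivalence_Lebesgue_Henstock_Integration.integrable_subinterval)
    have i2t: "integrable (lebesgue_on {0..t}) (\<lambda>t. p t * q' t)"
      using i2 sub by (rule Equivalence_Lebesgue_Henstock_Integration.integrable_subinterval)
    have ipt: "integrable (lebesgue_on {0..t}) p'" by (rule ac_int_sub[OF P t])
    have iqt: "integrable (lebesgue_on {0..t}) q'" by (rule ac_int_sub[OF Q t])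
    define A where "A = integral\<^sup>L (lebesgue_on {0..t}) (\<lambda>t. p' t * q t)"
    define B where "B = integral\<^sup>L (lebesgue_on {0..t}) (\<lambda>t. p t * q' t)"
    define Ip where "Ip = integral\<^sup>L (lebesgue_on {0..t}) p'"
    define Iq where "Iq = integral\<^sup>L (lebesgue_on {0..t}) q'"
    have e1: "integral\<^sup>L (lebesgue_on {0..t}) (\<lambda>s. p' s * (q s - q 0)) = A - q 0 * Ip"
    proof -
      have "integral\<^sup>L (lebesgue_on {0..t}) (\<lambda>s. p' s * (q s - q 0))
           = integral\<^sup>L (lebesgue_on {0..t}) (\<lambda>s. p' s * q s - q 0 * p' s)"
        by (simp add: algebra_simps)
      also have "\<dots> = A - integral\<^sup>L (lebesgue_on {0..t}) (\<lambda>s. q 0 * p' s)"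
        unfolding A_def by (rule Bochner_Integration.integral_diff[OF i1t]) (use ipt in simp)
      finally show ?thesis by (simp add: Ip_def)
    qed
    have e2: "integral\<^sup>L (lebesgue_on {0..t}) (\<lambda>s. q' s * (p s - p 0)) = B - p 0 * Iq"
    proof -
      have "integral\<^sup>L (lebesgue_on {0..t}) (\<lambda>s. q' s * (p s - p 0))
           = integral\<^sup>L (lebesgue_on {0..t}) (\<lambda>s. p s * q' s - p 0 * q' s)"
        by (simp add: algebra_simps)
      also have "\<dots> = B - integral\<^sup>L (lebesgue_on {0..t}) (\<lambda>s. p 0 * q' s)"
        unfolding B_def by (rule Bochner_Integration.integral_diff[OF i2t]) (use iqt in simp)
      finally show ?thesis by (simp add: Iq_def)
    qed
    have key: "(p t - p 0) * (q t - q 0) = A - q 0 * Ip + (B - p 0 * Iq)"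
      using ac_prod_key[OF P Q t] e1 e2 by simp
    have pt: "p t = p 0 + Ip" unfolding Ip_def by (rule ac_eq[OF P t])
    have qt: "q t = q 0 + Iq" unfolding Iq_def by (rule ac_eq[OF Q t])
    have sumAB: "integral\<^sup>L (lebesgue_on {0..t}) (\<lambda>t. p' t * q t + p t * q' t) = A + B"
      unfolding A_def B_def by (rule Bochner_Integration.integral_add[OF i1t i2t])
    show "p t * q t = p 0 * q 0 + integral\<^sup>L (lebesgue_on {0..t}) (\<lambda>t. p' t * q t + p t * q' t)"
      unfolding sumAB using key pt qt by (simp add: algebra_simps)
  qed
qed


lemma zero_indef_ae:
  fixes g :: "real \<Rightarrow> real"
  assumes ig: "integrable (lebesgue_on {0..T}) g" and T: "0 \<le> T"
    and z: "\<And>t. t \<in> {0..T} \<Longrightarrow> integral\<^sup>L (lebesgue_on {0..t}) g = 0"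
  shows "AE t in lebesgue_on {0..T}. g t = 0"
proof -
  define G where "G y = indicator {0..T} y * g y" for y
  have iG: "integrable lebesgue G" using ig leb_on_integrable unfolding G_def by blast
  have mG: "G \<in> borel_measurable (completion lborel)" using iG by auto
  obtain h where mh[measurable]: "h \<in> borel_measurable lborel" and ae: "AE y in lborel. G y = h y"
    using completion_ex_borel_measurable_real[OF mG] by blast
  have aeL: "AE y in lebesgue. G y = h y" using ae by (rule AE_completion)
  have ihL: "integrable lebesgue h"
  proof -
    have "integrable lebesgue G \<longleftrightarrow> integrable lebesgue h"
      by (rule integrable_cong_AE) (use mG aeL mh in \<open>auto intro: measurable_completion\<close>)
    then show ?thesis using iG by simp
  qed
  have ih: "integrable lborel h" using ihL integrable_completion[OF mh] by simp
  have intG: "integral\<^sup>L lebesgue (\<lambda>y. indicator {x<..} y * G y) = 0" for x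
  proof -
    have e1: "(\<lambda>y. indicator {x<..} y * G y) = (\<lambda>y. G y - indicator {0..min x T} y * g y)"
      by (auto simp: fun_eq_iff G_def indicator_def)
    have i2: "integrable lebesgue (\<lambda>y. indicator {0..min x T} y * g y)"
    proof -
      have "(\<lambda>y. indicator {0..min x T} y * g y) = (\<lambda>y. indicator {..x} y *\<^sub>R G y)"
        by (auto simp: fun_eq_iff G_def indicator_def)
      then show ?thesis using integrable_mult_indicator[OF _ iG, of "{..x}"] by simp
    qed
    have z1: "integral\<^sup>L lebesgue G = 0" using z[of T] T unfolding G_def by (simp add: leb_on_integral)
    have z2: "integral\<^sup>L lebesgue (\<lambda>y. indicator {0..min x T} y * g y) = 0"
    proof (cases "0 \<le> x")
      case True
      then show ?thesis using z[of "min x T"] T by (simp add: leb_on_integral)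
    next
      case False
      then have "(\<lambda>y. indicator {0..min x T} y * g y) = (\<lambda>y. 0)"
        by (auto simp: fun_eq_iff indicator_def)
      then show ?thesis by simp
    qed
    show ?thesis unfolding e1 using Bochner_Integration.integral_diff[OF iG i2] z1 z2 by simp
  qed
  have inth: "integral\<^sup>L lborel (\<lambda>y. indicator {x<..} y * h y) = 0" for x
  proof -
    have "integral\<^sup>L lborel (\<lambda>y. indicator {x<..} y * h y) = integral\<^sup>L lebesgue (\<lambda>y. indicator {x<..} y * h y)"
      by (rule integral_completion[symmetric]) measurable
    also have "\<dots> = integral\<^sup>L lebesgue (\<lambda>y. indicator {x<..} y * G y)"
      by (rule integral_cong_AE) (use aeL iG in \<open>auto intro: measurable_completion\<close>)
    finally show ?thesis using intG by simp
  qed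
  define hp where "hp y = max 0 (h y)" for y
  define hm where "hm y = max 0 (- h y)" for y
  have [measurable]: "hp \<in> borel_measurable lborel" "hm \<in> borel_measurable lborel"
    unfolding hp_def hm_def by measurable
  have ihp: "integrable lborel hp" unfolding hp_def using ih by (intro integrable_max) auto
  have ihm: "integrable lborel hm" unfolding hm_def using ih by (intro integrable_max) auto
  have ind_int: "integrable lborel (\<lambda>y. indicator {x<..} y * f y)" if "integrable lborel f" for x and f :: "real \<Rightarrow> real"
    using integrable_mult_indicator[OF _ that, of "{x<..}"] by simp
  have em: "emeasure (density lborel (\<lambda>y. ennreal (f y))) {x<..} = ennreal (integral\<^sup>L lborel (\<lambda>y. indicator {x<..} y * f y))"
    if "integrable lborel f" "\<And>y. 0 \<le> f y" for x and f :: "real \<Rightarrow> real"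
  proof -
    have mf[measurable]: "f \<in> borel_measurable lborel" using that(1) by auto
    have "emeasure (density lborel (\<lambda>y. ennreal (f y))) {x<..} = (\<integral>\<^sup>+ y. ennreal (f y) * indicator {x<..} y \<partial>lborel)"
      by (rule emeasure_density) auto
    also have "\<dots> = (\<integral>\<^sup>+ y. ennreal (indicator {x<..} y * f y) \<partial>lborel)"
      by (intro nn_integral_cong) (auto simp: indicator_def)
    also have "\<dots> = ennreal (integral\<^sup>L lborel (\<lambda>y. indicator {x<..} y * f y))"
      by (rule nn_integral_eq_integral[OF ind_int[OF that(1)]]) (use that(2) in auto)
    finally show ?thesis .
  qed
  have eqint: "integral\<^sup>L lborel (\<lambda>y. indicator {x<..} y * hp y) = integral\<^sup>L lborel (\<lambda>y. indicator {x<..} y * hm y)" for x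
  proof -
    have "(\<lambda>y. indicator {x<..} y * h y) = (\<lambda>y. indicator {x<..} y * hp y - indicator {x<..} y * hm y)"
      by (auto simp: fun_eq_iff hp_def hm_def max_def)
    then have "0 = integral\<^sup>L lborel (\<lambda>y. indicator {x<..} y * hp y - indicator {x<..} y * hm y)"
      using inth[of x] by simp
    also have "\<dots> = integral\<^sup>L lborel (\<lambda>y. indicator {x<..} y * hp y) - integral\<^sup>L lborel (\<lambda>y. indicator {x<..} y * hm y)"
      by (rule Bochner_Integration.integral_diff[OF ind_int[OF ihp] ind_int[OF ihm]])
    finally show ?thesis by simp
  qed
  have dens: "density lborel (\<lambda>y. ennreal (hp y)) = density lborel (\<lambda>y. ennreal (hm y))"
  proof (rule measure_eqI_lessThan)
    show "sets (density lborel (\<lambda>y. ennreal (hp y))) = sets borel" by simp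
    show "sets (density lborel (\<lambda>y. ennreal (hm y))) = sets borel" by simp
    fix x
    show "emeasure (density lborel (\<lambda>y. ennreal (hp y))) {x<..} < \<infinity>"
      using em[OF ihp, of x] by (simp add: hp_def)
    show "emeasure (density lborel (\<lambda>y. ennreal (hp y))) {x<..} = emeasure (density lborel (\<lambda>y. ennreal (hm y))) {x<..}"
      using em[OF ihp, of x] em[OF ihm, of x] eqint[of x] by (simp add: hp_def hm_def)
  qed
  have "AE y in lborel. ennreal (hp y) = ennreal (hm y)"
    by (rule sigma_finite_measure.density_unique[OF sigma_finite_lborel _ _ dens]) auto
  then have "AE y in lborel. h y = 0"
    by eventually_elim (auto simp: hp_def hm_def max_def split: if_splits)
  then have "AE y in lebesgue. h y = 0" by (rule AE_completion)
  with aeL have "AE y in lebesgue. G y = 0" by eventually_elim simp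
  then have "AE y in lebesgue. y \<in> {0..T} \<longrightarrow> g y = 0"
    by eventually_elim (auto simp: G_def)
  then show ?thesis by (subst AE_restrict_space_iff) auto
qed


lemma cont_ae_zero:
  fixes g :: "real \<Rightarrow> real"
  assumes cg: "continuous_on {0..T} g" and T: "0 < T" and ae: "AE t in lebesgue_on {0..T}. g t = 0"
    and t0: "t0 \<in> {0..T}"
  shows "g t0 = 0"
proof (rule ccontr)
  assume ne: "g t0 \<noteq> 0"
  obtain d where d: "d > 0" "\<And>t. t \<in> {0..T} \<Longrightarrow> dist t t0 < d \<Longrightarrow> dist (g t) (g t0) < \<bar>g t0\<bar>"
    using cg t0 ne unfolding continuous_on_iff by (metis zero_less_abs_iff)
  define a where "a = max 0 (t0 - d/2)"
  define b where "b = min T (t0 + d/2)"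
  have ab: "a < b" using d(1) T t0 by (auto simp: a_def b_def)
  have sub: "{a..b} \<subseteq> {0..T}" by (auto simp: a_def b_def)
  have nz: "g t \<noteq> 0" if "t \<in> {a..b}" for t
  proof
    assume "g t = 0"
    moreover have "dist t t0 < d" using that d(1) by (auto simp: a_def b_def dist_real_def)
    ultimately show False using d(2)[of t] sub that by auto
  qed
  have "AE t in lebesgue. t \<in> {0..T} \<longrightarrow> g t = 0"
    using ae by (subst (asm) AE_restrict_space_iff) auto
  then have "AE t in lebesgue. t \<notin> {a..b}"
    by eventually_elim (use sub nz in auto)
  then have "{a..b} \<in> null_sets lebesgue"
    by (subst AE_iff_null_sets) auto
  then have "emeasure lebesgue {a..b} = 0" by auto
  moreover have "emeasure lebesgue {a..b} = ennreal (b - a)" using ab by simp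
  ultimately show False using ab by simp
qed

lemma abs_le_1_sq: fixes y :: real shows "\<bar>y\<bar> \<le> 1 + y^2"
proof -
  have h: "(\<bar>y\<bar> - 1/2)^2 = y^2 - \<bar>y\<bar> + 1/4" by (simp add: power2_eq_square algebra_simps abs_mult_self_eq)
  have "0 \<le> (\<bar>y\<bar> - 1/2)^2" by simp
  then show ?thesis using h by linarith
qed

lemma H2_ac:
  assumes H: "H2_scalar T a a1 a2" and T: "0 \<le> T"
  shows "ac T a1 a2" "ac T a a1"
proof -
  have m: "a2 \<in> borel_measurable (lebesgue_on {0..T})" and sq: "integrable (lebesgue_on {0..T}) (\<lambda>t. (a2 t)^2)"
    using H by (auto simp: H2_scalar_def)
  have i2: "integrable (lebesgue_on {0..T}) a2"
  proof (rule Bochner_Integration.integrable_bound[where f="\<lambda>t. 1 + (a2 t)^2"])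
    show "integrable (lebesgue_on {0..T}) (\<lambda>t. 1 + (a2 t)^2)"
      by (rule Bochner_Integration.integrable_add[OF Lebesgue_Measure.integrable_const_ivl sq])
    show "AE x in lebesgue_on {0..T}. norm (a2 x) \<le> norm (1 + (a2 x)^2)"
    proof (rule AE_I2)
      fix x
      have "\<bar>a2 x\<bar> \<le> 1 + (a2 x)^2"
        by (rule abs_le_1_sq)
      then show "norm (a2 x) \<le> norm (1 + (a2 x)^2)" by simp
    qed
  qed (rule m)
  have e1: "\<forall>t\<in>{0..T}. a1 t = a1 0 + integral\<^sup>L (lebesgue_on {0..t}) a2"
    and e0: "\<forall>t\<in>{0..T}. a t = a 0 + integral\<^sup>L (lebesgue_on {0..t}) a1"
    using H unfolding H2_scalar_def by blast+
  show A1: "ac T a1 a2"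
    unfolding ac_def by (rule conjI[OF i2 e1])
  have "integrable (lebesgue_on {0..T}) a1"
    by (rule continuous_imp_integrable_real[OF ac_cont[OF A1]])
  then show "ac T a a1"
    unfolding ac_def by (rule conjI[OF _ e0])
qed


lemma young_real: fixes a b e :: real assumes "e > 0"
  shows "a * b \<le> (e * a^2 + b^2 / e) / 2"
proof -
  have "(e * a^2 + b^2 / e) / 2 - a * b = (e * a - b)^2 / (2 * e)"
    using assms by (simp add: field_simps power2_eq_square)
  moreover have "(e * a - b)^2 / (2 * e) \<ge> 0" using assms by simp
  ultimately show ?thesis by linarith
qed

lemma sq_int_meas: "sq_int \<Omega> u \<Longrightarrow> u \<in> borel_measurable (lebesgue_on \<Omega>)"
  by (simp add: sq_int_def)

lemma sq_int_int: "sq_int \<Omega> u \<Longrightarrow> integrable (lebesgue_on \<Omega>) (\<lambda>x. (norm (u x))^2)"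
  by (simp add: sq_int_def)

lemma sq_int_inner_integrable:
  fixes u w :: "real^'d \<Rightarrow> 'b::euclidean_space"
  assumes u: "sq_int \<Omega> u" and w: "sq_int \<Omega> w"
  shows "integrable (lebesgue_on \<Omega>) (\<lambda>x. inner (u x) (w x))"
proof (rule Bochner_Integration.integrable_bound[where f="\<lambda>x. (norm (u x))^2 + (norm (w x))^2"])
  show "integrable (lebesgue_on \<Omega>) (\<lambda>x. (norm (u x))^2 + (norm (w x))^2)"
    using sq_int_int[OF u] sq_int_int[OF w] by (rule Bochner_Integration.integrable_add)
  have [measurable]: "u \<in> borel_measurable (lebesgue_on \<Omega>)" "w \<in> borel_measurable (lebesgue_on \<Omega>)"
    using u w by (auto simp: sq_int_def)
  show "(\<lambda>x. inner (u x) (w x)) \<in> borel_measurable (lebesgue_on \<Omega>)" by measurable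
  show "AE x in lebesgue_on \<Omega>. norm (inner (u x) (w x)) \<le> norm ((norm (u x))^2 + (norm (w x))^2)"
  proof (rule AE_I2)
    fix x
    have "norm (inner (u x) (w x)) \<le> norm (u x) * norm (w x)" by (simp add: Cauchy_Schwarz_ineq2)
    also have "\<dots> \<le> (1 * (norm (u x))^2 + (norm (w x))^2 / 1) / 2" by (rule young_real) simp
    also have "\<dots> \<le> norm ((norm (u x))^2 + (norm (w x))^2)" by simp
    finally show "norm (inner (u x) (w x)) \<le> norm ((norm (u x))^2 + (norm (w x))^2)" .
  qed
qed

lemma sq_int_zero: "sq_int \<Omega> (\<lambda>x. 0::'b::euclidean_space)"
  by (simp add: sq_int_def)

lemma sq_int_add:
  fixes u w :: "real^'d \<Rightarrow> 'b::euclidean_space"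
  assumes u: "sq_int \<Omega> u" and w: "sq_int \<Omega> w"
  shows "sq_int \<Omega> (\<lambda>x. u x + w x)"
  unfolding sq_int_def
proof
  have [measurable]: "u \<in> borel_measurable (lebesgue_on \<Omega>)" "w \<in> borel_measurable (lebesgue_on \<Omega>)"
    using u w by (auto simp: sq_int_def)
  show "(\<lambda>x. u x + w x) \<in> borel_measurable (lebesgue_on \<Omega>)" by measurable
  show "integrable (lebesgue_on \<Omega>) (\<lambda>x. (norm (u x + w x))^2)"
  proof (rule Bochner_Integration.integrable_bound[where f="\<lambda>x. 2 * (norm (u x))^2 + 2 * (norm (w x))^2"])
    show "integrable (lebesgue_on \<Omega>) (\<lambda>x. 2 * (norm (u x))^2 + 2 * (norm (w x))^2)"
      using sq_int_int[OF u] sq_int_int[OF w] by (intro Bochner_Integration.integrable_add integrable_mult_right)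
    show "(\<lambda>x. (norm (u x + w x))^2) \<in> borel_measurable (lebesgue_on \<Omega>)" by measurable
    show "AE x in lebesgue_on \<Omega>. norm ((norm (u x + w x))^2) \<le> norm (2 * (norm (u x))^2 + 2 * (norm (w x))^2)"
    proof (rule AE_I2)
      fix x
      have "norm (u x + w x) \<le> norm (u x) + norm (w x)" by (rule norm_triangle_ineq)
      then have "(norm (u x + w x))^2 \<le> (norm (u x) + norm (w x))^2" by (simp add: power_mono)
      also have "\<dots> \<le> 2 * (norm (u x))^2 + 2 * (norm (w x))^2"
        using young_real[of 1 "norm (u x)" "norm (w x)"] by (simp add: power2_eq_square algebra_simps)
      finally show "norm ((norm (u x + w x))^2) \<le> norm (2 * (norm (u x))^2 + 2 * (norm (w x))^2)" by simp
    qed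
  qed
qed

lemma sq_int_scale:
  fixes u :: "real^'d \<Rightarrow> 'b::euclidean_space"
  assumes u: "sq_int \<Omega> u"
  shows "sq_int \<Omega> (\<lambda>x. c *\<^sub>R u x)"
  unfolding sq_int_def
proof
  have [measurable]: "u \<in> borel_measurable (lebesgue_on \<Omega>)" using u by (auto simp: sq_int_def)
  show "(\<lambda>x. c *\<^sub>R u x) \<in> borel_measurable (lebesgue_on \<Omega>)" by measurable
  have "integrable (lebesgue_on \<Omega>) (\<lambda>x. c^2 * (norm (u x))^2)"
    using sq_int_int[OF u] by (rule integrable_mult_right)
  then show "integrable (lebesgue_on \<Omega>) (\<lambda>x. (norm (c *\<^sub>R u x))^2)"
    by (simp add: power_mult_distrib)
qed

lemma sq_int_sum:
  fixes f :: "nat \<Rightarrow> real^'d \<Rightarrow> 'b::euclidean_space"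
  assumes "finite I" "\<And>i. i \<in> I \<Longrightarrow> sq_int \<Omega> (f i)"
  shows "sq_int \<Omega> (\<lambda>x. \<Sum>i\<in>I. f i x)"
  using assms
proof (induction I rule: finite_induct)
  case empty then show ?case using sq_int_zero by simp
next
  case (insert a F)
  then show ?case using sq_int_add[of \<Omega> "f a" "\<lambda>x. \<Sum>i\<in>F. f i x"] by simp
qed

lemma sq_int_lin_comb:
  fixes B :: "(real^'d \<Rightarrow> 'b::euclidean_space) list"
  assumes "\<forall>q\<in>set B. sq_int \<Omega> q"
  shows "sq_int \<Omega> (lin_comb B c)"
  unfolding lin_comb_def
  by (rule sq_int_sum) (use assms in \<open>auto intro!: sq_int_scale\<close>)

lemma sq_int_fspan:
  fixes B :: "(real^'d \<Rightarrow> 'b::euclidean_space) list"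
  assumes "\<forall>q\<in>set B. sq_int \<Omega> q" "w \<in> fspan B"
  shows "sq_int \<Omega> w"
  using assms sq_int_lin_comb unfolding fspan_def by blast

lemma l2ip_comm: "l2ip \<Omega> u w = l2ip \<Omega> w u"
  unfolding l2ip_def by (simp add: inner_commute)

lemma l2ip_sum_left:
  fixes f :: "nat \<Rightarrow> real^'d \<Rightarrow> 'b::euclidean_space"
  assumes "finite I" "\<And>i. i \<in> I \<Longrightarrow> sq_int \<Omega> (f i)" "sq_int \<Omega> w"
  shows "l2ip \<Omega> (\<lambda>x. \<Sum>i\<in>I. c i *\<^sub>R f i x) w = (\<Sum>i\<in>I. c i * l2ip \<Omega> (f i) w)"
proof -
  have "l2ip \<Omega> (\<lambda>x. \<Sum>i\<in>I. c i *\<^sub>R f i x) w = integral\<^sup>L (lebesgue_on \<Omega>) (\<lambda>x. \<Sum>i\<in>I. c i * inner (f i x) (w x))"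
    unfolding l2ip_def by (simp add: inner_sum_left)
  also have "\<dots> = (\<Sum>i\<in>I. integral\<^sup>L (lebesgue_on \<Omega>) (\<lambda>x. c i * inner (f i x) (w x)))"
    by (rule Bochner_Integration.integral_sum) (use assms in \<open>auto intro!: integrable_mult_right sq_int_inner_integrable\<close>)
  also have "\<dots> = (\<Sum>i\<in>I. c i * l2ip \<Omega> (f i) w)" by (simp add: l2ip_def)
  finally show ?thesis .
qed

lemma l2ip_lin_comb_left:
  fixes B :: "(real^'d \<Rightarrow> 'b::euclidean_space) list"
  assumes "\<forall>q\<in>set B. sq_int \<Omega> q" "sq_int \<Omega> w"
  shows "l2ip \<Omega> (lin_comb B c) w = (\<Sum>i<length B. c i * l2ip \<Omega> (B ! i) w)"
  unfolding lin_comb_def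
  by (rule l2ip_sum_left) (use assms in auto)

lemma l2ip_lin_comb2:
  fixes B :: "(real^'d \<Rightarrow> 'b::euclidean_space) list"
  assumes "\<forall>q\<in>set B. sq_int \<Omega> q"
  shows "l2ip \<Omega> (lin_comb B c) (lin_comb B e) = (\<Sum>i<length B. \<Sum>j<length B. c i * e j * l2ip \<Omega> (B ! i) (B ! j))"
proof -
  have "l2ip \<Omega> (lin_comb B c) (lin_comb B e) = (\<Sum>i<length B. c i * l2ip \<Omega> (B ! i) (lin_comb B e))"
    by (rule l2ip_lin_comb_left) (use assms sq_int_lin_comb in auto)
  also have "\<dots> = (\<Sum>i<length B. c i * (\<Sum>j<length B. e j * l2ip \<Omega> (B ! j) (B ! i)))"
    by (intro sum.cong refl arg_cong2[where f="(*)"]) (subst l2ip_comm, rule l2ip_lin_comb_left, use assms in auto)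
  also have "\<dots> = (\<Sum>i<length B. \<Sum>j<length B. c i * e j * l2ip \<Omega> (B ! i) (B ! j))"
    by (simp add: sum_distrib_left l2ip_comm[of \<Omega> "B ! _" "B ! _"] mult.assoc mult.left_commute)
  finally show ?thesis .
qed

lemma l2ip_self: "l2ip \<Omega> u u = integral\<^sup>L (lebesgue_on \<Omega>) (\<lambda>x. (norm (u x))^2)"
  unfolding l2ip_def by (simp add: power2_norm_eq_inner)

lemma l2ip_self_nonneg: "0 \<le> l2ip \<Omega> u u"
  unfolding l2ip_self by (rule Bochner_Integration.integral_nonneg) simp

lemma l2ip_young:
  fixes u w :: "real^'d \<Rightarrow> 'b::euclidean_space"
  assumes u: "sq_int \<Omega> u" and w: "sq_int \<Omega> w" and e: "e > 0"
  shows "\<bar>l2ip \<Omega> u w\<bar> \<le> (e * l2ip \<Omega> u u + l2ip \<Omega> w w / e) / 2"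
proof -
  have "\<bar>l2ip \<Omega> u w\<bar> \<le> integral\<^sup>L (lebesgue_on \<Omega>) (\<lambda>x. (e * (norm (u x))^2 + (norm (w x))^2 / e) / 2)"
  proof (rule order.trans)
    show "\<bar>l2ip \<Omega> u w\<bar> \<le> integral\<^sup>L (lebesgue_on \<Omega>) (\<lambda>x. \<bar>inner (u x) (w x)\<bar>)"
      unfolding l2ip_def using integral_norm_bound[of "lebesgue_on \<Omega>" "\<lambda>x. inner (u x) (w x)"]
      by (simp only: real_norm_def)
    show "integral\<^sup>L (lebesgue_on \<Omega>) (\<lambda>x. \<bar>inner (u x) (w x)\<bar>) \<le> integral\<^sup>L (lebesgue_on \<Omega>) (\<lambda>x. (e * (norm (u x))^2 + (norm (w x))^2 / e) / 2)"
    proof (rule integral_mono)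
      show "integrable (lebesgue_on \<Omega>) (\<lambda>x. \<bar>inner (u x) (w x)\<bar>)"
        using sq_int_inner_integrable[OF u w] by simp
      show "integrable (lebesgue_on \<Omega>) (\<lambda>x. (e * (norm (u x))^2 + (norm (w x))^2 / e) / 2)"
        using sq_int_int[OF u] sq_int_int[OF w] by (intro integrable_divide Bochner_Integration.integrable_add integrable_mult_right) auto
      fix x
      have "\<bar>inner (u x) (w x)\<bar> \<le> norm (u x) * norm (w x)" by (simp add: Cauchy_Schwarz_ineq2)
      also have "\<dots> \<le> (e * (norm (u x))^2 + (norm (w x))^2 / e) / 2" by (rule young_real[OF e])
      finally show "\<bar>inner (u x) (w x)\<bar> \<le> (e * (norm (u x))^2 + (norm (w x))^2 / e) / 2" .
    qed
  qed
  also have "\<dots> = (e * l2ip \<Omega> u u + l2ip \<Omega> w w / e) / 2"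
    using sq_int_int[OF u] sq_int_int[OF w] by (simp add: l2ip_self Bochner_Integration.integral_add integrable_mult_right)
  finally show ?thesis .
qed


lemma AE_sec:
  fixes P :: "real \<times> 'b::euclidean_space \<Rightarrow> bool"
  assumes ae: "AE z in lebesgue_on S. P z" and S: "S \<in> sets lebesgue"
  shows "AE t in lborel. AE x in lborel. (t, x) \<in> S \<longrightarrow> P (t, x)"
proof -
  have "AE z in lebesgue. z \<in> S \<longrightarrow> P z"
    using ae S by (subst (asm) AE_restrict_space_iff) auto
  then have "AE z in (lborel :: (real \<times> 'b) measure). z \<in> S \<longrightarrow> P z"
    by (simp add: AE_completion_iff)
  then have "AE z in (lborel \<Otimes>\<^sub>M lborel :: (real \<times> 'b) measure). z \<in> S \<longrightarrow> P z"
    unfolding lborel_prod .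
  then show ?thesis by (rule lborel_pair.AE_pair)
qed

lemma borel_rep:
  fixes G :: "real \<times> 'b::euclidean_space \<Rightarrow> real"
  assumes "G \<in> borel_measurable lebesgue"
  obtains h where "h \<in> borel_measurable (lborel \<Otimes>\<^sub>M lborel)"
    "AE t in lborel. AE x in lborel. G (t, x) = h (t, x)"
    "AE z in lebesgue. G z = h z"
proof -
  obtain h where mh: "h \<in> borel_measurable lborel" and ae: "AE z in lborel. G z = h z"
    using completion_ex_borel_measurable_real[of G lborel] assms by blast
  have "AE z in (lborel \<Otimes>\<^sub>M lborel :: (real \<times> 'b) measure). G z = h z"
    using ae unfolding lborel_prod .
  then have "AE t in lborel. AE x in lborel. G (t, x) = h (t, x)" by (rule lborel_pair.AE_pair)
  moreover have "h \<in> borel_measurable (lborel \<Otimes>\<^sub>M lborel)" using mh by (simp add: lborel_prod)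
  moreover have "AE z in lebesgue. G z = h z" using ae by (rule AE_completion)
  ultimately show ?thesis using that by blast
qed

lemma sec_meas:
  fixes g :: "real \<times> 'b::euclidean_space \<Rightarrow> real"
  assumes mg: "g \<in> borel_measurable (lebesgue_on (A \<times> \<Omega>))" and S: "A \<times> \<Omega> \<in> sets lebesgue"
    and O: "\<Omega> \<in> sets lebesgue"
  shows "AE t in lborel. t \<in> A \<longrightarrow> (\<lambda>x. g (t, x)) \<in> borel_measurable (lebesgue_on \<Omega>)"
proof -
  define G where "G z = indicator (A \<times> \<Omega>) z * g z" for z
  have mG: "G \<in> borel_measurable lebesgue"
    using mg S unfolding G_def by (subst (asm) borel_measurable_restrict_space_iff) auto
  obtain h where mh: "h \<in> borel_measurable (lborel \<Otimes>\<^sub>M lborel)"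
    and ae: "AE t in lborel. AE x in lborel. G (t, x) = h (t, x)"
    using borel_rep[OF mG] by blast
  show ?thesis using ae
  proof eventually_elim
    fix t assume aet: "AE x in lborel. G (t, x) = h (t, x)"
    show "t \<in> A \<longrightarrow> (\<lambda>x. g (t, x)) \<in> borel_measurable (lebesgue_on \<Omega>)"
    proof
      assume tA: "t \<in> A"
      have mht: "(\<lambda>x. h (t, x)) \<in> borel_measurable lborel"
        using measurable_compose[OF measurable_Pair1'[of t lborel lborel] mh] by simp
      have "(\<lambda>x. G (t, x)) \<in> borel_measurable lebesgue"
      proof (rule borel_measurable_AE)
        show "(\<lambda>x. h (t, x)) \<in> borel_measurable lebesgue" using mht by (rule measurable_completion)
        show "AE x in lebesgue. h (t, x) = G (t, x)" using AE_completion[OF aet] by eventually_elim simp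
      qed
      moreover have "(\<lambda>x. G (t, x)) = (\<lambda>x. indicator \<Omega> x *\<^sub>R g (t, x))"
        using tA by (auto simp: G_def fun_eq_iff indicator_def)
      ultimately show "(\<lambda>x. g (t, x)) \<in> borel_measurable (lebesgue_on \<Omega>)"
        using O by (subst borel_measurable_restrict_space_iff) auto
    qed
  qed
qed

lemma sec_int:
  fixes g :: "real \<times> 'b::euclidean_space \<Rightarrow> real"
  assumes ig: "integrable (lebesgue_on (A \<times> \<Omega>)) g" and S: "A \<times> \<Omega> \<in> sets lebesgue"
    and O: "\<Omega> \<in> sets lebesgue"
  obtains K where "integrable lborel K"
    "AE t in lborel. t \<in> A \<longrightarrow> integrable (lebesgue_on \<Omega>) (\<lambda>x. g (t, x))
        \<and> K t = integral\<^sup>L (lebesgue_on \<Omega>) (\<lambda>x. g (t, x))"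
proof -
  define G where "G z = indicator (A \<times> \<Omega>) z * g z" for z
  have iG: "integrable lebesgue G"
    using ig S unfolding G_def by (subst (asm) integrable_restrict_space) auto
  have mG: "G \<in> borel_measurable lebesgue" using iG by auto
  obtain h where mh[measurable]: "h \<in> borel_measurable (lborel \<Otimes>\<^sub>M lborel)"
    and ae: "AE t in lborel. AE x in lborel. G (t, x) = h (t, x)"
    and aeL: "AE z in lebesgue. G z = h z"
    using borel_rep[OF mG] by blast
  have mh': "h \<in> borel_measurable (lborel :: (real \<times> 'b) measure)" using mh by (simp add: lborel_prod)
  have "integrable lebesgue G \<longleftrightarrow> integrable lebesgue h"
    by (rule integrable_cong_AE) (use mG aeL mh' in \<open>auto intro: measurable_completion\<close>)
  then have "integrable lebesgue h" using iG by simp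
  then have "integrable lborel h" using integrable_completion[OF mh'] by simp
  then have ih: "integrable (lborel \<Otimes>\<^sub>M lborel) h" by (simp add: lborel_prod)
  define K where "K t = (\<integral>x. h (t, x) \<partial>lborel)" for t
  have iK: "integrable lborel K" unfolding K_def by (rule lborel_pair.integrable_fst'[OF ih])
  have aei: "AE t in lborel. integrable lborel (\<lambda>x. h (t, x))" by (rule lborel_pair.AE_integrable_fst'[OF ih])
  have "AE t in lborel. t \<in> A \<longrightarrow> integrable (lebesgue_on \<Omega>) (\<lambda>x. g (t, x))
        \<and> K t = integral\<^sup>L (lebesgue_on \<Omega>) (\<lambda>x. g (t, x))"
    using ae aei
  proof eventually_elim
    fix t assume aet: "AE x in lborel. G (t, x) = h (t, x)" and it: "integrable lborel (\<lambda>x. h (t, x))"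
    show "t \<in> A \<longrightarrow> integrable (lebesgue_on \<Omega>) (\<lambda>x. g (t, x)) \<and> K t = integral\<^sup>L (lebesgue_on \<Omega>) (\<lambda>x. g (t, x))"
    proof
      assume tA: "t \<in> A"
      have mht: "(\<lambda>x. h (t, x)) \<in> borel_measurable lborel"
        using measurable_compose[OF measurable_Pair1'[of t lborel lborel] mh] by simp
      have aetL: "AE x in lebesgue. G (t, x) = h (t, x)" using aet by (rule AE_completion)
      have mGt: "(\<lambda>x. G (t, x)) \<in> borel_measurable lebesgue"
        by (rule borel_measurable_AE[OF measurable_completion[OF mht]]) (use aetL in auto)
      have iht: "integrable lebesgue (\<lambda>x. h (t, x))" using it integrable_completion[OF mht] by simp
      have "integrable lebesgue (\<lambda>x. G (t, x)) \<longleftrightarrow> integrable lebesgue (\<lambda>x. h (t, x))"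
        by (rule integrable_cong_AE) (use mGt aetL mht in \<open>auto intro: measurable_completion\<close>)
      then have iGt: "integrable lebesgue (\<lambda>x. G (t, x))" using iht by simp
      have eG: "(\<lambda>x. G (t, x)) = (\<lambda>x. indicator \<Omega> x *\<^sub>R g (t, x))"
        using tA by (auto simp: G_def fun_eq_iff indicator_def)
      have "integrable (lebesgue_on \<Omega>) (\<lambda>x. g (t, x))"
        using iGt O unfolding eG by (subst integrable_restrict_space) auto
      moreover have "integral\<^sup>L (lebesgue_on \<Omega>) (\<lambda>x. g (t, x)) = integral\<^sup>L lebesgue (\<lambda>x. G (t, x))"
        using O unfolding eG by (subst integral_restrict_space) auto
      moreover have "integral\<^sup>L lebesgue (\<lambda>x. G (t, x)) = integral\<^sup>L lebesgue (\<lambda>x. h (t, x))"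
        by (rule integral_cong_AE) (use mGt aetL mht in \<open>auto intro: measurable_completion\<close>)
      moreover have "integral\<^sup>L lebesgue (\<lambda>x. h (t, x)) = K t"
        unfolding K_def by (rule integral_completion[OF mht])
      ultimately show "integrable (lebesgue_on \<Omega>) (\<lambda>x. g (t, x)) \<and> K t = integral\<^sup>L (lebesgue_on \<Omega>) (\<lambda>x. g (t, x))"
        by simp
    qed
  qed
  with iK that show ?thesis by blast
qed


lemma AE_all_separable:
  fixes \<Lambda> :: "'t \<Rightarrow> 'v::{metric_space, second_countable_topology} \<Rightarrow> real"
  assumes cont: "\<And>t. continuous_on UNIV (\<Lambda> t)"
    and each: "\<And>w. w \<in> V \<Longrightarrow> AE t in M. \<Lambda> t w = 0"
  shows "AE t in M. \<forall>w\<in>V. \<Lambda> t w = 0"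
proof -
  obtain D where D: "countable D" "D \<subseteq> V" "V \<subseteq> closure D" by (rule separable)
  have "AE t in M. \<forall>d\<in>D. \<Lambda> t d = 0"
    using D(1) by (rule AE_ball_countable[THEN iffD2]) (use D(2) each in blast)
  then show ?thesis
  proof eventually_elim
    fix t assume z: "\<forall>d\<in>D. \<Lambda> t d = 0"
    have cl: "closed {w. \<Lambda> t w = 0}"
      using continuous_closed_preimage_constant[OF cont[of t] closed_UNIV, of 0] by simp
    have "D \<subseteq> {w. \<Lambda> t w = 0}" using z by auto
    then have "closure D \<subseteq> {w. \<Lambda> t w = 0}" using cl by (rule closure_minimal)
    then show "\<forall>w\<in>V. \<Lambda> t w = 0" using D(3) by auto
  qed
qed




lemma gronwall:
  fixes E a :: "real \<Rightarrow> real"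
  assumes cE: "continuous_on {0..T} E" and K: "K > 0"
    and mono: "\<And>s t. 0 \<le> s \<Longrightarrow> s \<le> t \<Longrightarrow> t \<le> T \<Longrightarrow> a s \<le> a t"
    and ineq: "\<And>t. t \<in> {0..T} \<Longrightarrow> E t \<le> a t + K * integral\<^sup>L (lebesgue_on {0..t}) E"
    and t0: "t0 \<in> {0..T}"
  shows "E t0 \<le> a t0 * exp (K * t0)"
proof -
  define U where "U t = integral {0..t} E" for t
  define c where "c = a t0 / K"
  have cE0: "continuous_on {0..t0} E" using t0 by (intro continuous_on_subset[OF cE]) auto
  have UL: "integral\<^sup>L (lebesgue_on {0..t}) E = U t" if "t \<in> {0..T}" for t
  proof -
    have "continuous_on {0..t} E" using that by (intro continuous_on_subset[OF cE]) auto
    then have "integrable (lebesgue_on {0..t}) E" by (rule continuous_imp_integrable_real)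
    then show ?thesis unfolding U_def by (rule lebesgue_integral_eq_integral) auto
  qed
  have bnd: "E t \<le> a t0 + K * U t" if "t \<in> {0..t0}" for t
  proof -
    have tT: "t \<in> {0..T}" using that t0 by auto
    have "E t \<le> a t + K * U t" using ineq[OF tT] UL[OF tT] by simp
    also have "a t \<le> a t0" using mono[of t t0] that t0 by auto
    finally show ?thesis by simp
  qed
  define g where "g t = exp (- K * t) * (U t + c)" for t
  define g' where "g' t = exp (- K * t) * E t - K * exp (- K * t) * (U t + c)" for t
  have dU: "(U has_real_derivative E t) (at t within {0..t0})" if "t \<in> {0..t0}" for t
    using integral_has_vector_derivative[OF cE0 that] unfolding U_def
    by (simp add: has_real_derivative_iff_has_vector_derivative)
  have dg: "(g has_vector_derivative g' t) (at t within {0..t0})" if "t \<in> {0..t0}" for t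
  proof -
    have "(g has_real_derivative g' t) (at t within {0..t0})"
      unfolding g_def g'_def
      by (rule derivative_eq_intros dU[OF that] | simp add: algebra_simps)+
    then show ?thesis by (simp add: has_real_derivative_iff_has_vector_derivative)
  qed
  have ftc: "(g' has_integral (g t0 - g 0)) {0..t0}"
    using t0 by (intro fundamental_theorem_of_calculus dg) auto
  have "g t0 - g 0 \<le> 0"
  proof (rule has_integral_le[OF ftc has_integral_0])
    fix t assume t: "t \<in> {0..t0}"
    have "E t - K * (U t + c) \<le> 0" using bnd[OF t] K by (simp add: c_def algebra_simps)
    then have "exp (- K * t) * (E t - K * (U t + c)) \<le> 0"
      by (simp add: mult_nonneg_nonpos)
    then show "g' t \<le> 0" by (simp add: g'_def algebra_simps)
  qed
  moreover have "g 0 = c" by (simp add: g_def U_def)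
  ultimately have "exp (- K * t0) * (U t0 + c) \<le> c" by (simp add: g_def)
  then have "U t0 + c \<le> exp (K * t0) * c"
    by (simp add: exp_minus field_simps)
  then have "K * (U t0 + c) \<le> K * (exp (K * t0) * c)" using K by simp
  then have "K * U t0 + a t0 \<le> exp (K * t0) * a t0" using K
    by (simp add: c_def algebra_simps)
  then show ?thesis using bnd[of t0] t0 by (simp add: algebra_simps)
qed



definition qf :: "(nat \<Rightarrow> nat \<Rightarrow> real) \<Rightarrow> nat \<Rightarrow> (nat \<Rightarrow> real) \<Rightarrow> (nat \<Rightarrow> real) \<Rightarrow> real" where
  "qf G n x y = (\<Sum>i<n. \<Sum>j<n. x i * y j * G i j)"

lemma qf_sym: assumes "\<And>i j. G i j = G j i" shows "qf G n x y = qf G n y x"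
  unfolding qf_def by (subst sum.swap) (simp add: assms mult.commute mult.left_commute)

lemma qf_add_left: "qf G n (\<lambda>i. x i + z i) y = qf G n x y + qf G n z y"
  unfolding qf_def by (simp add: algebra_simps sum.distrib)

lemma ac_qf:
  assumes X: "\<And>i. i < n \<Longrightarrow> ac T (x i) (x' i)" and Y: "\<And>i. i < n \<Longrightarrow> ac T (y i) (y' i)"
  shows "ac T (\<lambda>t. qf G n (\<lambda>i. x i t) (\<lambda>i. y i t))
              (\<lambda>t. qf G n (\<lambda>i. x' i t) (\<lambda>i. y i t) + qf G n (\<lambda>i. x i t) (\<lambda>i. y' i t))"
proof -
  have "ac T (\<lambda>t. \<Sum>i<n. \<Sum>j<n. G i j * (x i t * y j t))
             (\<lambda>t. \<Sum>i<n. \<Sum>j<n. G i j * (x' i t * y j t + x i t * y' j t))"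
    using X Y by (intro ac_sum ac_cmult ac_mult) auto
  then show ?thesis
    unfolding qf_def
    by (simp add: algebra_simps sum.distrib)
qed

lemma integrable_qf:
  assumes "\<And>i j. i < n \<Longrightarrow> j < n \<Longrightarrow> integrable M (\<lambda>s. x i s * y j s)"
  shows "integrable M (\<lambda>s. qf G n (\<lambda>i. x i s) (\<lambda>i. y i s))"
  unfolding qf_def using assms
  by (intro Bochner_Integration.integrable_sum) (simp add: integrable_mult_left)

lemma integrable_prod_sq:
  fixes f g :: "real \<Rightarrow> real"
  assumes "f \<in> borel_measurable M" "g \<in> borel_measurable M"
    "integrable M (\<lambda>s. (f s)^2)" "integrable M (\<lambda>s. (g s)^2)"
  shows "integrable M (\<lambda>s. f s * g s)"
proof (rule Bochner_Integration.integrable_bound[where f="\<lambda>s. (f s)^2 + (g s)^2"])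
  show "integrable M (\<lambda>s. (f s)^2 + (g s)^2)" using assms(3,4) by (rule Bochner_Integration.integrable_add)
  show "(\<lambda>s. f s * g s) \<in> borel_measurable M" using assms(1,2) by measurable
  show "AE x in M. norm (f x * g x) \<le> norm ((f x)^2 + (g x)^2)"
  proof (rule AE_I2)
    fix x
    have "\<bar>f x\<bar> * \<bar>g x\<bar> \<le> (1 * \<bar>f x\<bar>^2 + \<bar>g x\<bar>^2 / 1) / 2" by (rule young_real) simp
    then have "\<bar>f x\<bar> * \<bar>g x\<bar> \<le> ((f x)^2 + (g x)^2) / 2" by simp
    moreover have "0 \<le> \<bar>f x\<bar> * \<bar>g x\<bar>" by simp
    moreover have "((f x)^2 + (g x)^2) / 2 \<le> (f x)^2 + (g x)^2" by simp
    ultimately have "\<bar>f x\<bar> * \<bar>g x\<bar> \<le> (f x)^2 + (g x)^2"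
      by (meson order.trans)
    then show "norm (f x * g x) \<le> norm ((f x)^2 + (g x)^2)" by (simp add: abs_mult)
  qed
qed


lemma AE_oo_cc:
  assumes "AE t in lebesgue_on {0<..<T}. P t"
  shows "AE t in lebesgue_on {0..(T::real)}. P t"
proof -
  have "AE t in lebesgue. t \<in> {0<..<T} \<longrightarrow> P t"
    using assms by (subst (asm) AE_restrict_space_iff) auto
  moreover have "AE t in lebesgue. (t::real) \<noteq> 0" by (rule AE_leb_ne)
  moreover have "AE t in lebesgue. (t::real) \<noteq> T" by (rule AE_leb_ne)
  ultimately have "AE t in lebesgue. t \<in> {0..T} \<longrightarrow> P t"
    by eventually_elim auto
  then show ?thesis by (subst AE_restrict_space_iff) auto
qed

lemma wdiv_props:
  assumes "\<exists>g\<in>fspan B. has_weak_div \<Omega> w g"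
  shows "has_weak_div \<Omega> w (wdiv \<Omega> w)" "sq_int \<Omega> (wdiv \<Omega> w)"
proof -
  from assms obtain g where "has_weak_div \<Omega> w g" by blast
  then show h: "has_weak_div \<Omega> w (wdiv \<Omega> w)" unfolding wdiv_def by (rule someI[of "has_weak_div \<Omega> w"])
  then show "sq_int \<Omega> (wdiv \<Omega> w)" by (simp add: has_weak_div_def)
qed

lemma eq2_deriv:
  fixes \<Omega> :: "(real^'d) set" and B :: "(real^'d \<Rightarrow> real) list" and W :: "(real^'d \<Rightarrow> real^'d) list"
  assumes T: "T > 0"
    and sqB: "\<forall>q\<in>set B. sq_int \<Omega> q" and sqW: "\<forall>q\<in>set W. sq_int \<Omega> q"
    and A3: "\<forall>w\<in>fspan W. \<exists>g\<in>fspan B. has_weak_div \<Omega> w g"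
    and Ha: "\<forall>i<length B. H2_scalar T (a i) (a1 i) (a2 i)"
    and Hpsi: "\<forall>t\<in>{0..T}. \<psi> t = lin_comb B (\<lambda>i. a i t) \<and> \<psi>t t = lin_comb B (\<lambda>i. a1 i t) \<and> \<psi>tt t = lin_comb B (\<lambda>i. a2 i t)"
    and He: "\<forall>i<length W. H2_scalar T (e i) (e1 i) (e2 i)"
    and Hv: "\<forall>t\<in>{0..T}. v t = lin_comb W (\<lambda>i. e i t) \<and> vt t = lin_comb W (\<lambda>i. e1 i t) \<and> vtt t = lin_comb W (\<lambda>i. e2 i t)"
    and hyp: "AE t in lebesgue_on {0<..<T}. \<forall>w\<in>fspan W. l2ip \<Omega> (v t) w + l2ip \<Omega> (\<psi> t) (wdiv \<Omega> w) = 0"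
  shows "AE s in lebesgue_on {0..T}. \<forall>w\<in>fspan W. l2ip \<Omega> (vtt s) w + l2ip \<Omega> (\<psi>tt s) (wdiv \<Omega> w) = 0"
proof -
  define n where "n = length B"
  define m where "m = length W"
  have acA: "ac T (a i) (a1 i)" "ac T (a1 i) (a2 i)" if "i < n" for i
    using H2_ac[of T "a i" "a1 i" "a2 i"] Ha T that unfolding n_def by auto
  have acE: "ac T (e i) (e1 i)" "ac T (e1 i) (e2 i)" if "i < m" for i
    using H2_ac[of T "e i" "e1 i" "e2 i"] He T that unfolding m_def by auto
  define L where "L w = ((\<lambda>j. l2ip \<Omega> (W ! j) w), (\<lambda>i. l2ip \<Omega> (B ! i) (wdiv \<Omega> w)))" for w
  define \<Lambda> where "\<Lambda> s z = (\<Sum>j<m. e2 j s * fst z j) + (\<Sum>i<n. a2 i s * snd z i)" for s and z :: "(nat \<Rightarrow> real) \<times> (nat \<Rightarrow> real)"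
  have each: "AE s in lebesgue_on {0..T}. \<Lambda> s (L w) = 0" if w: "w \<in> fspan W" for w
  proof -
    have sqw: "sq_int \<Omega> w" using sqW w by (rule sq_int_fspan)
    have sqd: "sq_int \<Omega> (wdiv \<Omega> w)" using wdiv_props(2) A3 w by blast
    define P where "P j = l2ip \<Omega> (W ! j) w" for j
    define Q where "Q i = l2ip \<Omega> (B ! i) (wdiv \<Omega> w)" for i
    define \<Phi> where "\<Phi> t = (\<Sum>j<m. P j * e j t) + (\<Sum>i<n. Q i * a i t)" for t
    define \<Phi>1 where "\<Phi>1 t = (\<Sum>j<m. P j * e1 j t) + (\<Sum>i<n. Q i * a1 i t)" for t
    define \<Phi>2 where "\<Phi>2 t = (\<Sum>j<m. P j * e2 j t) + (\<Sum>i<n. Q i * a2 i t)" for t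
    have ac1: "ac T \<Phi> \<Phi>1" unfolding \<Phi>_def \<Phi>1_def
      by (intro ac_add ac_sum ac_cmult) (auto intro: acA acE)
    have ac2: "ac T \<Phi>1 \<Phi>2" unfolding \<Phi>1_def \<Phi>2_def
      by (intro ac_add ac_sum ac_cmult) (auto intro: acA acE)
    have rep: "l2ip \<Omega> (lin_comb W x) w + l2ip \<Omega> (lin_comb B y) (wdiv \<Omega> w)
        = (\<Sum>j<m. P j * x j) + (\<Sum>i<n. Q i * y i)" for x y
      using l2ip_lin_comb_left[OF sqW sqw, of x] l2ip_lin_comb_left[OF sqB sqd, of y]
      by (simp add: P_def Q_def m_def n_def mult.commute)
    have "AE t in lebesgue_on {0..T}. \<Phi> t = 0"
      using AE_oo_cc[OF hyp]
    proof (rule lebesgue_on_mono)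
      fix t assume h: "\<forall>w\<in>fspan W. l2ip \<Omega> (v t) w + l2ip \<Omega> (\<psi> t) (wdiv \<Omega> w) = 0" and t: "t \<in> {0..T}"
      have "l2ip \<Omega> (v t) w + l2ip \<Omega> (\<psi> t) (wdiv \<Omega> w) = 0" using h w by blast
      then show "\<Phi> t = 0" using Hv Hpsi t rep by (simp add: \<Phi>_def)
    qed
    then have z0: "\<Phi> t = 0" if "t \<in> {0..T}" for t
      using cont_ae_zero[OF ac_cont[OF ac1] T] that by blast
    have "AE t in lebesgue_on {0..T}. \<Phi>1 t = 0"
    proof (rule zero_indef_ae)
      show "integrable (lebesgue_on {0..T}) \<Phi>1" by (rule ac_int[OF ac1])
      fix t assume t: "t \<in> {0..T}"
      show "integral\<^sup>L (lebesgue_on {0..t}) \<Phi>1 = 0"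
        using ac_eq[OF ac1 t] z0[OF t] z0[of 0] T by simp
    qed (use T in simp)
    then have z1: "\<Phi>1 t = 0" if "t \<in> {0..T}" for t
      using cont_ae_zero[OF ac_cont[OF ac2] T] that by blast
    have ae2: "AE t in lebesgue_on {0..T}. \<Phi>2 t = 0"
    proof (rule zero_indef_ae)
      show "integrable (lebesgue_on {0..T}) \<Phi>2" by (rule ac_int[OF ac2])
      fix t assume t: "t \<in> {0..T}"
      show "integral\<^sup>L (lebesgue_on {0..t}) \<Phi>2 = 0"
        using ac_eq[OF ac2 t] z1[OF t] z1[of 0] T by simp
    qed (use T in simp)
    show ?thesis using ae2
      by (rule lebesgue_on_mono) (simp add: \<Lambda>_def \<Phi>2_def L_def P_def Q_def mult.commute)
  qed
  have cont: "continuous_on UNIV (\<Lambda> s)" for s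
    unfolding \<Lambda>_def by (intro continuous_intros continuous_on_product_then_coordinatewise)
  have "AE s in lebesgue_on {0..T}. \<forall>z\<in>L ` fspan W. \<Lambda> s z = 0"
    by (rule AE_all_separable[OF cont]) (use each in blast)
  then show ?thesis
  proof (rule lebesgue_on_mono)
    fix s assume h: "\<forall>z\<in>L ` fspan W. \<Lambda> s z = 0" and s: "s \<in> {0..T}"
    show "\<forall>w\<in>fspan W. l2ip \<Omega> (vtt s) w + l2ip \<Omega> (\<psi>tt s) (wdiv \<Omega> w) = 0"
    proof
      fix w assume w: "w \<in> fspan W"
      have sqw: "sq_int \<Omega> w" using sqW w by (rule sq_int_fspan)
      have sqd: "sq_int \<Omega> (wdiv \<Omega> w)" using wdiv_props(2) A3 w by blast
      have "\<Lambda> s (L w) = 0" using h w by blast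
      moreover have "l2ip \<Omega> (vtt s) w + l2ip \<Omega> (\<psi>tt s) (wdiv \<Omega> w) = \<Lambda> s (L w)"
        using Hv Hpsi s l2ip_lin_comb_left[OF sqW sqw, of "\<lambda>i. e2 i s"] l2ip_lin_comb_left[OF sqB sqd, of "\<lambda>i. a2 i s"]
        by (simp add: \<Lambda>_def L_def m_def n_def)
      ultimately show "l2ip \<Omega> (vtt s) w + l2ip \<Omega> (\<psi>tt s) (wdiv \<Omega> w) = 0" by simp
    qed
  qed
qed


lemma pointwise_ineq:
  fixes \<Omega> :: "(real^'d) set" and B :: "(real^'d \<Rightarrow> real) list" and W :: "(real^'d \<Rightarrow> real^'d) list"
    and P \<alpha>s fs :: "real^'d \<Rightarrow> real" and V Vt Vtt \<beta>s :: "real^'d \<Rightarrow> real^'d"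
  assumes kap: "\<kappa> > 0"
    and \<alpha>b: "\<forall>x\<in>\<Omega>. \<kappa> \<le> 1 + 2 * k * \<alpha>s x \<and> 1 + 2 * k * \<alpha>s x \<le> Aup"
    and m\<alpha>: "\<alpha>s \<in> borel_measurable (lebesgue_on \<Omega>)"
    and \<beta>b: "AE x in lebesgue_on \<Omega>. norm (\<beta>s x) \<le> \<beta>up"
    and sqf: "sq_int \<Omega> fs" and sqP: "sq_int \<Omega> P" and sqV: "sq_int \<Omega> V" and sqVt: "sq_int \<Omega> Vt"
    and sqVtt: "sq_int \<Omega> Vtt"
    and sqD1: "sq_int \<Omega> (wdiv \<Omega> V)" and sqD2: "sq_int \<Omega> (wdiv \<Omega> Vt)"
    and PB: "P \<in> fspan B" and VW: "V \<in> fspan W" and VtW: "Vt \<in> fspan W"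
    and eq1: "\<forall>\<phi>\<in>fspan B.
              l2ip \<Omega> (\<lambda>x. (1 + 2 * k * \<alpha>s x) * P x) \<phi>
              - l2ip \<Omega> (\<lambda>x. c^2 * wdiv \<Omega> V x + b * wdiv \<Omega> Vt x) \<phi>
              + 2 * \<sigma> * l2ip \<Omega> (\<lambda>x. inner (\<beta>s x) (Vt x)) \<phi>
              = l2ip \<Omega> fs \<phi>"
    and eq2: "\<forall>w\<in>fspan W. l2ip \<Omega> Vtt w + l2ip \<Omega> P (wdiv \<Omega> w) = 0"
  shows "\<kappa> * l2ip \<Omega> P P + c^2 * l2ip \<Omega> Vtt V + b * l2ip \<Omega> Vtt Vt
         \<le> \<kappa> / 2 * l2ip \<Omega> P P + (4 * \<sigma>^2 * \<beta>up^2 / \<kappa>) * l2ip \<Omega> Vt Vt + l2ip \<Omega> fs fs / \<kappa>"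
proof -
  have mP[measurable]: "P \<in> borel_measurable (lebesgue_on \<Omega>)" using sqP by (rule sq_int_meas)
  have mVt[measurable]: "Vt \<in> borel_measurable (lebesgue_on \<Omega>)" using sqVt by (rule sq_int_meas)
  have iP2: "integrable (lebesgue_on \<Omega>) (\<lambda>x. (norm (P x))^2)" using sqP by (rule sq_int_int)
  have iVt2: "integrable (lebesgue_on \<Omega>) (\<lambda>x. (norm (Vt x))^2)" using sqVt by (rule sq_int_int)
  define A where "A = l2ip \<Omega> (\<lambda>x. (1 + 2 * k * \<alpha>s x) * P x) P"
  define D1 where "D1 = l2ip \<Omega> (wdiv \<Omega> V) P"
  define D2 where "D2 = l2ip \<Omega> (wdiv \<Omega> Vt) P"
  define Bt where "Bt = l2ip \<Omega> (\<lambda>x. inner (\<beta>s x) (Vt x)) P"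
  define Ff where "Ff = l2ip \<Omega> fs P"
  have Aup: "\<bar>1 + 2 * k * \<alpha>s x\<bar> \<le> Aup" if "x \<in> \<Omega>" for x using \<alpha>b that kap by force
  have A_ge: "\<kappa> * l2ip \<Omega> P P \<le> A"
  proof -
    have "\<kappa> * l2ip \<Omega> P P = integral\<^sup>L (lebesgue_on \<Omega>) (\<lambda>x. \<kappa> * (norm (P x))^2)"
      by (simp add: l2ip_self)
    also have "\<dots> \<le> integral\<^sup>L (lebesgue_on \<Omega>) (\<lambda>x. (1 + 2 * k * \<alpha>s x) * (norm (P x))^2)"
    proof (rule integral_mono)
      show "integrable (lebesgue_on \<Omega>) (\<lambda>x. \<kappa> * (norm (P x))^2)" using iP2 by simp
      show "integrable (lebesgue_on \<Omega>) (\<lambda>x. (1 + 2 * k * \<alpha>s x) * (norm (P x))^2)"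
      proof (rule Bochner_Integration.integrable_bound[where f="\<lambda>x. Aup * (norm (P x))^2"])
        show "integrable (lebesgue_on \<Omega>) (\<lambda>x. Aup * (norm (P x))^2)" using iP2 by simp
        show "(\<lambda>x. (1 + 2 * k * \<alpha>s x) * (norm (P x))^2) \<in> borel_measurable (lebesgue_on \<Omega>)"
          using m\<alpha> by measurable
        show "AE x in lebesgue_on \<Omega>. norm ((1 + 2 * k * \<alpha>s x) * (norm (P x))^2) \<le> norm (Aup * (norm (P x))^2)"
        proof (rule AE_I2)
          fix x assume "x \<in> space (lebesgue_on \<Omega>)"
          then have x: "x \<in> \<Omega>" by simp
          have "\<bar>1 + 2 * k * \<alpha>s x\<bar> * (norm (P x))^2 \<le> Aup * (norm (P x))^2"
            using Aup[OF x] by (rule mult_right_mono) simp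
          moreover have "0 \<le> Aup" using Aup[OF x] by linarith
          ultimately show "norm ((1 + 2 * k * \<alpha>s x) * (norm (P x))^2) \<le> norm (Aup * (norm (P x))^2)"
            by (simp add: abs_mult)
        qed
      qed
      fix x assume "x \<in> space (lebesgue_on \<Omega>)"
      then have x: "x \<in> \<Omega>" by simp
      show "\<kappa> * (norm (P x))^2 \<le> (1 + 2 * k * \<alpha>s x) * (norm (P x))^2"
        using \<alpha>b x by (intro mult_right_mono) auto
    qed
    also have "\<dots> = A" unfolding A_def l2ip_def by (simp add: power2_eq_square mult.assoc)
    finally show ?thesis .
  qed
  have split: "l2ip \<Omega> (\<lambda>x. c^2 * wdiv \<Omega> V x + b * wdiv \<Omega> Vt x) P = c^2 * D1 + b * D2"
  proof -
    have i1: "integrable (lebesgue_on \<Omega>) (\<lambda>x. wdiv \<Omega> V x * P x)"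
      using sq_int_inner_integrable[OF sqD1 sqP] by simp
    have i2: "integrable (lebesgue_on \<Omega>) (\<lambda>x. wdiv \<Omega> Vt x * P x)"
      using sq_int_inner_integrable[OF sqD2 sqP] by simp
    have "l2ip \<Omega> (\<lambda>x. c^2 * wdiv \<Omega> V x + b * wdiv \<Omega> Vt x) P
        = integral\<^sup>L (lebesgue_on \<Omega>) (\<lambda>x. c^2 * (wdiv \<Omega> V x * P x) + b * (wdiv \<Omega> Vt x * P x))"
      unfolding l2ip_def by (simp add: algebra_simps)
    also have "\<dots> = c^2 * integral\<^sup>L (lebesgue_on \<Omega>) (\<lambda>x. wdiv \<Omega> V x * P x)
                  + b * integral\<^sup>L (lebesgue_on \<Omega>) (\<lambda>x. wdiv \<Omega> Vt x * P x)"
      using i1 i2 by (simp add: Bochner_Integration.integral_add)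
    finally show ?thesis by (simp add: D1_def D2_def l2ip_def)
  qed
  have D1e: "D1 = - l2ip \<Omega> Vtt V"
    using eq2 VW unfolding D1_def by (subst l2ip_comm) (simp add: eq_neg_iff_add_eq_0 add.commute)
  have D2e: "D2 = - l2ip \<Omega> Vtt Vt"
    using eq2 VtW unfolding D2_def by (subst l2ip_comm) (simp add: eq_neg_iff_add_eq_0 add.commute)
  have Bt_b: "\<bar>2 * \<sigma> * Bt\<bar> \<le> \<kappa> / 4 * l2ip \<Omega> P P + (4 * \<sigma>^2 * \<beta>up^2 / \<kappa>) * l2ip \<Omega> Vt Vt"
  proof -
    define bnd where "bnd x = \<kappa> / 4 * (norm (P x))^2 + (4 * \<sigma>^2 * \<beta>up^2 / \<kappa>) * (norm (Vt x))^2" for x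
    have ib: "integrable (lebesgue_on \<Omega>) bnd" unfolding bnd_def using iP2 iVt2 by simp
    have "\<bar>2 * \<sigma> * Bt\<bar> = \<bar>integral\<^sup>L (lebesgue_on \<Omega>) (\<lambda>x. 2 * \<sigma> * (inner (\<beta>s x) (Vt x) * P x))\<bar>"
      unfolding Bt_def l2ip_def by simp
    also have "\<dots> \<le> integral\<^sup>L (lebesgue_on \<Omega>) (\<lambda>x. \<bar>2 * \<sigma> * (inner (\<beta>s x) (Vt x) * P x)\<bar>)"
      using integral_norm_bound[of "lebesgue_on \<Omega>" "\<lambda>x. 2 * \<sigma> * (inner (\<beta>s x) (Vt x) * P x)"]
      by (simp only: real_norm_def)
    also have "\<dots> \<le> integral\<^sup>L (lebesgue_on \<Omega>) bnd"
    proof (rule integral_mono_AE'[OF ib])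
      show "AE x in lebesgue_on \<Omega>. 0 \<le> bnd x" by (rule AE_I2) (use kap in \<open>simp add: bnd_def\<close>)
      show "AE x in lebesgue_on \<Omega>. \<bar>2 * \<sigma> * (inner (\<beta>s x) (Vt x) * P x)\<bar> \<le> bnd x"
        using \<beta>b
      proof eventually_elim
        fix x assume bx: "norm (\<beta>s x) \<le> \<beta>up"
        have "\<bar>2 * \<sigma> * (inner (\<beta>s x) (Vt x) * P x)\<bar> = \<bar>P x\<bar> * (2 * \<bar>\<sigma>\<bar> * \<bar>inner (\<beta>s x) (Vt x)\<bar>)"
          by (simp add: abs_mult)
        also have "\<dots> \<le> \<bar>P x\<bar> * (2 * \<bar>\<sigma>\<bar> * \<beta>up * norm (Vt x))"
        proof (intro mult_left_mono)
          have "\<bar>inner (\<beta>s x) (Vt x)\<bar> \<le> norm (\<beta>s x) * norm (Vt x)" by (rule Cauchy_Schwarz_ineq2)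
          also have "\<dots> \<le> \<beta>up * norm (Vt x)" using bx by (simp add: mult_right_mono)
          finally show "2 * \<bar>\<sigma>\<bar> * \<bar>inner (\<beta>s x) (Vt x)\<bar> \<le> 2 * \<bar>\<sigma>\<bar> * \<beta>up * norm (Vt x)"
            by (simp add: mult.assoc mult_left_mono)
        qed simp_all
        also have "\<dots> \<le> ((\<kappa>/2) * \<bar>P x\<bar>^2 + (2 * \<bar>\<sigma>\<bar> * \<beta>up * norm (Vt x))^2 / (\<kappa>/2)) / 2"
          by (rule young_real) (use kap in simp)
        also have "\<dots> = bnd x"
          by (simp add: bnd_def power_mult_distrib field_simps)
        finally show "\<bar>2 * \<sigma> * (inner (\<beta>s x) (Vt x) * P x)\<bar> \<le> bnd x" .
      qed
    qed
    also have "\<dots> = \<kappa> / 4 * l2ip \<Omega> P P + (4 * \<sigma>^2 * \<beta>up^2 / \<kappa>) * l2ip \<Omega> Vt Vt"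
      unfolding bnd_def using iP2 iVt2 by (simp add: l2ip_self Bochner_Integration.integral_add)
    finally show ?thesis .
  qed
  have Ff_b: "\<bar>Ff\<bar> \<le> l2ip \<Omega> fs fs / \<kappa> + \<kappa> / 4 * l2ip \<Omega> P P"
  proof -
    have "\<bar>Ff\<bar> \<le> ((2/\<kappa>) * l2ip \<Omega> fs fs + l2ip \<Omega> P P / (2/\<kappa>)) / 2"
      unfolding Ff_def by (rule l2ip_young[OF sqf sqP]) (use kap in simp)
    also have "\<dots> = l2ip \<Omega> fs fs / \<kappa> + \<kappa> / 4 * l2ip \<Omega> P P" by (simp add: field_simps)
    finally show ?thesis .
  qed
  have e: "A - (c^2 * D1 + b * D2) + 2 * \<sigma> * Bt = Ff"
    using eq1 PB unfolding A_def Bt_def Ff_def split[symmetric] by blast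
  show ?thesis using A_ge e D1e D2e Bt_b Ff_b by (simp add: algebra_simps)
qed


lemma final_algebra:
  fixes b c \<kappa> Kb N0 N1 M0 M1 M01 Z F N00 N10 M00 M10 M010 I0 I1 J0 J1 :: real
  assumes pos: "b > 0" "\<kappa> > 0" "Kb \<ge> 0"
    and nn: "N0 \<ge> 0" "N1 \<ge> 0" "M0 \<ge> 0" "M1 \<ge> 0" "Z \<ge> 0" "F \<ge> 0"
       "N00 \<ge> 0" "N10 \<ge> 0" "M00 \<ge> 0" "M10 \<ge> 0" "I0 \<ge> 0" "I1 \<ge> 0" "J0 \<ge> 0" "J1 \<ge> 0"
    and h1: "\<kappa>/2 * Z + (b/2 * M1 + c^2 * M01) - (b/2 * M10 + c^2 * M010) \<le> (Kb + c^2) * J1 + F / \<kappa>"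
    and h2: "c^2 * \<bar>M01\<bar> \<le> b/4 * M1 + c^4/b * M0"
    and h3: "c^2 * \<bar>M010\<bar> \<le> c^2/2 * (M00 + M10)"
    and h4: "M0 \<le> M00 + J0 + J1"
    and h5: "N0 \<le> N00 + I0 + I1"
    and h6: "N1 \<le> N10 + I1 + Z"
  shows "N0 + N1 + Z + M0 + M1 \<le>
     (3 + 4 * (b/2 + c^2/2 + c^4/b + Kb + c^2 + 1/\<kappa>) / \<kappa> + 4 * (b/2 + c^2/2 + c^4/b + Kb + c^2 + 1/\<kappa>) / b)
     * ((N00 + N10 + M00 + M10) + F) +
     (3 + 4 * (b/2 + c^2/2 + c^4/b + Kb + c^2 + 1/\<kappa>) / \<kappa> + 4 * (b/2 + c^2/2 + c^4/b + Kb + c^2 + 1/\<kappa>) / b)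
     * (I0 + I1 + J0 + J1)"
proof -
  define E0 where "E0 = N00 + N10 + M00 + M10"
  define IY where "IY = I0 + I1 + J0 + J1"
  define L where "L = E0 + IY + F"
  define K2 where "K2 = b/2 + c^2/2 + c^4/b + Kb + c^2 + 1/\<kappa>"
  have Lnn: "L \<ge> 0" using nn by (simp add: L_def E0_def IY_def)
  have c2: "c^2 \<ge> 0" "c^4/b \<ge> 0" using pos by auto
  have a1: "c^4/b * M0 \<le> c^4/b * L"
    using h4 nn c2 by (intro mult_left_mono) (auto simp: L_def E0_def IY_def)
  have a2: "(Kb + c^2) * J1 \<le> (Kb + c^2) * L"
    using nn c2 pos by (intro mult_left_mono) (auto simp: L_def E0_def IY_def)
  have a3: "b/2 * M10 \<le> b/2 * L"
    using nn pos by (intro mult_left_mono) (auto simp: L_def E0_def IY_def)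
  have a4: "c^2/2 * (M00 + M10) \<le> c^2/2 * L"
    using nn c2 by (intro mult_left_mono) (auto simp: L_def E0_def IY_def)
  have a5: "F / \<kappa> \<le> 1/\<kappa> * L"
    using nn pos by (simp add: L_def E0_def IY_def divide_right_mono)
  have m01: "- (c^2 * M01) \<le> c^2 * \<bar>M01\<bar>" "c^2 * M010 \<le> c^2 * \<bar>M010\<bar>"
  proof -
    have "- M01 \<le> \<bar>M01\<bar>" "M010 \<le> \<bar>M010\<bar>" by auto
    then show "- (c^2 * M01) \<le> c^2 * \<bar>M01\<bar>" "c^2 * M010 \<le> c^2 * \<bar>M010\<bar>"
      using c2(1) mult_left_mono by fastforce+
  qed
  have K2L: "K2 * L = b/2 * L + c^2/2 * L + c^4/b * L + (Kb + c^2) * L + 1/\<kappa> * L"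
    by (simp add: K2_def algebra_simps)
  have s1: "\<kappa>/2 * Z + b/4 * M1 \<le> K2 * L"
    using h1 h2 h3 a1 a2 a3 a4 a5 m01 K2L by linarith
  have K2nn: "K2 \<ge> 0" using pos c2 by (simp add: K2_def)
  have zb: "Z \<le> 2 / \<kappa> * (K2 * L)"
  proof -
    have "b/4 * M1 \<ge> 0" using nn pos by simp
    then have "\<kappa>/2 * Z \<le> K2 * L" using s1 by linarith
    then show ?thesis using pos by (simp add: field_simps)
  qed
  have mb: "M1 \<le> 4 / b * (K2 * L)"
  proof -
    have "\<kappa>/2 * Z \<ge> 0" using nn pos by simp
    then have "b/4 * M1 \<le> K2 * L" using s1 by linarith
    then show ?thesis using pos by (simp add: field_simps)
  qed
  have "N0 + N1 + Z + M0 + M1 \<le> 3 * L + 2 * Z + M1"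
    using h4 h5 h6 nn by (simp add: L_def E0_def IY_def)
  also have "\<dots> \<le> 3 * L + 2 * (2 / \<kappa> * (K2 * L)) + 4 / b * (K2 * L)"
    using zb mb by linarith
  also have "\<dots> = (3 + 4 * K2 / \<kappa> + 4 * K2 / b) * L" by (simp add: algebra_simps)
  finally have fin: "N0 + N1 + Z + M0 + M1 \<le> (3 + 4 * K2 / \<kappa> + 4 * K2 / b) * L" .
  have eq: "(3 + 4 * K2 / \<kappa> + 4 * K2 / b) * (E0 + F) + (3 + 4 * K2 / \<kappa> + 4 * K2 / b) * IY
      = (3 + 4 * K2 / \<kappa> + 4 * K2 / b) * L" unfolding L_def by (simp only: distrib_left add.assoc)
  show ?thesis unfolding K2_def[symmetric] E0_def[symmetric] IY_def[symmetric] eq by (rule fin)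
qed


lemma AE_lborel_to_on:
  assumes "AE s in lborel. s \<in> {0<..<T} \<longrightarrow> P s" "0 \<le> a" "b \<le> (T::real)"
  shows "AE s in lebesgue_on {a..b}. P s"
proof -
  have "AE s in lebesgue. s \<in> {0<..<T} \<longrightarrow> P s" using assms(1) by (rule AE_completion)
  moreover have "AE s in lebesgue. (s::real) \<noteq> 0" by (rule AE_leb_ne)
  moreover have "AE s in lebesgue. (s::real) \<noteq> T" by (rule AE_leb_ne)
  ultimately have "AE s in lebesgue. s \<in> {a..b} \<longrightarrow> P s"
    by eventually_elim (use assms(2,3) in auto)
  then show ?thesis by (subst AE_restrict_space_iff) auto
qed

lemma integrable_via_K:
  fixes F K :: "real \<Rightarrow> real"
  assumes iK: "integrable lborel K" and ae: "AE s in lborel. s \<in> {0<..<T} \<longrightarrow> F s = K s"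
    and ab: "0 \<le> a" "b \<le> T"
  shows "integrable (lebesgue_on {a..b}) F"
proof -
  have mK: "K \<in> borel_measurable lborel" using iK by auto
  have i1: "integrable lborel (\<lambda>s. indicator {a..b} s * K s)"
    using integrable_mult_indicator[OF _ iK, of "{a..b}"] by simp
  have m1: "(\<lambda>s. indicator {a..b} s * K s) \<in> borel_measurable lborel" using mK by measurable
  have i1L: "integrable lebesgue (\<lambda>s. indicator {a..b} s * K s)"
    using i1 integrable_completion[OF m1] by simp
  have aeL: "AE s in lebesgue. indicator {a..b} s * K s = indicator {a..b} s * F s"
  proof -
    have "AE s in lebesgue. s \<in> {0<..<T} \<longrightarrow> F s = K s" using ae by (rule AE_completion)
    moreover have "AE s in lebesgue. (s::real) \<noteq> 0" by (rule AE_leb_ne)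
    moreover have "AE s in lebesgue. (s::real) \<noteq> T" by (rule AE_leb_ne)
    ultimately show ?thesis by eventually_elim (use ab in \<open>auto simp: indicator_def\<close>)
  qed
  have m2: "(\<lambda>s. indicator {a..b} s * F s) \<in> borel_measurable lebesgue"
    by (rule borel_measurable_AE[OF measurable_completion[OF m1] aeL])
  have "integrable lebesgue (\<lambda>s. indicator {a..b} s * K s) \<longleftrightarrow> integrable lebesgue (\<lambda>s. indicator {a..b} s * F s)"
    by (rule integrable_cong_AE) (use m1 m2 aeL in \<open>auto intro: measurable_completion\<close>)
  then have "integrable lebesgue (\<lambda>s. indicator {a..b} s * F s)" using i1L by simp
  then show ?thesis using leb_on_integrable by blast
qed

definition Cst :: "real \<Rightarrow> real \<Rightarrow> real \<Rightarrow> real \<Rightarrow> real \<Rightarrow> real \<Rightarrow> real" where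
  "Cst b c \<kappa> \<sigma> \<beta>up T =
    (3 + 4 * (b/2 + c^2/2 + c^4/b + 4 * \<sigma>^2 * \<beta>up^2 / \<kappa> + c^2 + 1/\<kappa>) / \<kappa>
       + 4 * (b/2 + c^2/2 + c^4/b + 4 * \<sigma>^2 * \<beta>up^2 / \<kappa> + c^2 + 1/\<kappa>) / b)
    * exp ((3 + 4 * (b/2 + c^2/2 + c^4/b + 4 * \<sigma>^2 * \<beta>up^2 / \<kappa> + c^2 + 1/\<kappa>) / \<kappa>
       + 4 * (b/2 + c^2/2 + c^4/b + 4 * \<sigma>^2 * \<beta>up^2 / \<kappa> + c^2 + 1/\<kappa>) / b) * T)"

lemma Cst_pos: assumes "b > 0" "\<kappa> > 0" shows "Cst b c \<kappa> \<sigma> \<beta>up T > 0"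
proof -
  have "b/2 + c^2/2 + c^4/b + 4 * \<sigma>^2 * \<beta>up^2 / \<kappa> + c^2 + 1/\<kappa> > 0"
    using assms by (intro add_pos_nonneg add_nonneg_pos) auto
  then have "3 + 4 * (b/2 + c^2/2 + c^4/b + 4 * \<sigma>^2 * \<beta>up^2 / \<kappa> + c^2 + 1/\<kappa>) / \<kappa>
       + 4 * (b/2 + c^2/2 + c^4/b + 4 * \<sigma>^2 * \<beta>up^2 / \<kappa> + c^2 + 1/\<kappa>) / b > 0"
    using assms by (intro add_pos_pos) auto
  then show ?thesis unfolding Cst_def by simp
qed


lemma main_est:
  fixes \<Omega> :: "(real^'d) set" and b c k \<sigma> T \<alpha>lo \<alpha>up \<beta>up :: real
    and B :: "(real^'d \<Rightarrow> real) list" and W :: "(real^'d \<Rightarrow> real^'d) list"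
    and \<alpha> :: "real \<Rightarrow> real^'d \<Rightarrow> real" and \<beta> :: "real \<Rightarrow> real^'d \<Rightarrow> real^'d"
    and f :: "real \<Rightarrow> real^'d \<Rightarrow> real" and \<psi> \<psi>t \<psi>tt :: "real \<Rightarrow> real^'d \<Rightarrow> real"
    and v vt vtt :: "real \<Rightarrow> real^'d \<Rightarrow> real^'d"
  assumes O: "open \<Omega>" and pars: "b > 0" "c > 0" "T > 0" and kap0: "1 - 2 * \<bar>k\<bar> * \<alpha>lo > 0"
    and A1: "\<forall>q\<in>set B. sq_int \<Omega> q" and A2: "\<forall>w\<in>set W. Hdiv \<Omega> w"
    and A3: "\<forall>w\<in>fspan W. \<exists>g\<in>fspan B. has_weak_div \<Omega> w g"
    and A4: "(\<lambda>(t,x). \<alpha> t x) \<in> borel_measurable (lebesgue_on ({0<..<T} \<times> \<Omega>))"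
    and A6: "\<forall>t\<in>{0<..<T}. \<forall>x\<in>\<Omega>. 1 - 2 * \<bar>k\<bar> * \<alpha>lo \<le> 1 + 2 * k * \<alpha> t x
                              \<and> 1 + 2 * k * \<alpha> t x \<le> 1 + 2 * \<bar>k\<bar> * \<alpha>up"
    and A7: "AE z in lebesgue_on ({0<..<T} \<times> \<Omega>). norm ((\<lambda>(t,x). \<beta> t x) z) \<le> \<beta>up"
    and A8: "(\<lambda>(t,x). f t x) \<in> borel_measurable (lebesgue_on ({0<..<T} \<times> \<Omega>))"
    and A9: "integrable (lebesgue_on ({0<..<T} \<times> \<Omega>)) (\<lambda>(t,x). (f t x)^2)"
    and A10: "H2_time B T \<psi> \<psi>t \<psi>tt" and A11: "H2_time W T v vt vtt"
    and A12: "AE t in lebesgue_on {0<..<T}.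
           (\<forall>\<phi>\<in>fspan B.
              l2ip \<Omega> (\<lambda>x. (1 + 2 * k * \<alpha> t x) * \<psi>tt t x) \<phi>
              - l2ip \<Omega> (\<lambda>x. c^2 * wdiv \<Omega> (v t) x + b * wdiv \<Omega> (vt t) x) \<phi>
              + 2 * \<sigma> * l2ip \<Omega> (\<lambda>x. inner (\<beta> t x) (vt t x)) \<phi>
              = l2ip \<Omega> (f t) \<phi>)
           \<and> (\<forall>w\<in>fspan W. l2ip \<Omega> (v t) w + l2ip \<Omega> (\<psi> t) (wdiv \<Omega> w) = 0)"
  shows "\<forall>t\<in>{0..T}. energy \<Omega> \<psi> \<psi>t \<psi>tt v vt t
              \<le> Cst b c (1 - 2 * \<bar>k\<bar> * \<alpha>lo) \<sigma> \<beta>up T * (energy \<Omega> \<psi> \<psi>t \<psi>tt v vt 0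
                     + integral\<^sup>L (lebesgue_on {0..t}) (\<lambda>s. l2ip \<Omega> (f s) (f s)))"
proof -
  define \<kappa> where "\<kappa> = 1 - 2 * \<bar>k\<bar> * \<alpha>lo"
  have kap: "\<kappa> > 0" using kap0 by (simp add: \<kappa>_def)
  define Kb where "Kb = 4 * \<sigma>^2 * \<beta>up^2 / \<kappa>"
  have Kb0: "Kb \<ge> 0" using kap by (simp add: Kb_def)
  have T0: "0 \<le> T" using pars by simp
  obtain a a1 a2 where Ha: "\<forall>i<length B. H2_scalar T (a i) (a1 i) (a2 i)"
    and Hpsi: "\<forall>t\<in>{0..T}. \<psi> t = lin_comb B (\<lambda>i. a i t) \<and> \<psi>t t = lin_comb B (\<lambda>i. a1 i t) \<and> \<psi>tt t = lin_comb B (\<lambda>i. a2 i t)"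
    using A10 unfolding H2_time_def by blast
  obtain e e1 e2 where He: "\<forall>i<length W. H2_scalar T (e i) (e1 i) (e2 i)"
    and Hv: "\<forall>t\<in>{0..T}. v t = lin_comb W (\<lambda>i. e i t) \<and> vt t = lin_comb W (\<lambda>i. e1 i t) \<and> vtt t = lin_comb W (\<lambda>i. e2 i t)"
    using A11 unfolding H2_time_def by blast
  define n where "n = length B"
  define m where "m = length W"
  have acA: "ac T (a i) (a1 i)" "ac T (a1 i) (a2 i)" if "i < n" for i
    using H2_ac[of T "a i" "a1 i" "a2 i"] Ha T0 that unfolding n_def by auto
  have acE: "ac T (e i) (e1 i)" "ac T (e1 i) (e2 i)" if "i < m" for i
    using H2_ac[of T "e i" "e1 i" "e2 i"] He T0 that unfolding m_def by auto
  have sqW: "\<forall>q\<in>set W. sq_int \<Omega> q" using A2 by (auto simp: Hdiv_def)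
  have inB: "lin_comb B x \<in> fspan B" for x by (auto simp: fspan_def)
  have inW: "lin_comb W x \<in> fspan W" for x by (auto simp: fspan_def)
  define GB where "GB i j = l2ip \<Omega> (B ! i) (B ! j)" for i j
  define GW where "GW i j = l2ip \<Omega> (W ! i) (W ! j)" for i j
  have GBs: "GB i j = GB j i" for i j by (simp add: GB_def l2ip_comm)
  have GWs: "GW i j = GW j i" for i j by (simp add: GW_def l2ip_comm)
  have qB: "l2ip \<Omega> (lin_comb B x) (lin_comb B y) = qf GB n x y" for x y
    using l2ip_lin_comb2[OF A1] by (simp add: qf_def GB_def n_def)
  have qW: "l2ip \<Omega> (lin_comb W x) (lin_comb W y) = qf GW m x y" for x y
    using l2ip_lin_comb2[OF sqW] by (simp add: qf_def GW_def m_def)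
  define n0 where "n0 s = qf GB n (\<lambda>i. a i s) (\<lambda>i. a i s)" for s
  define n01 where "n01 s = qf GB n (\<lambda>i. a i s) (\<lambda>i. a1 i s)" for s
  define n1 where "n1 s = qf GB n (\<lambda>i. a1 i s) (\<lambda>i. a1 i s)" for s
  define n12 where "n12 s = qf GB n (\<lambda>i. a1 i s) (\<lambda>i. a2 i s)" for s
  define n2 where "n2 s = qf GB n (\<lambda>i. a2 i s) (\<lambda>i. a2 i s)" for s
  define m0 where "m0 s = qf GW m (\<lambda>i. e i s) (\<lambda>i. e i s)" for s
  define m01 where "m01 s = qf GW m (\<lambda>i. e i s) (\<lambda>i. e1 i s)" for s
  define m1 where "m1 s = qf GW m (\<lambda>i. e1 i s) (\<lambda>i. e1 i s)" for s
  define m12 where "m12 s = qf GW m (\<lambda>i. e1 i s) (\<lambda>i. e2 i s)" for s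
  define m02 where "m02 s = qf GW m (\<lambda>i. e i s) (\<lambda>i. e2 i s)" for s
  have eN0: "l2ip \<Omega> (\<psi> s) (\<psi> s) = n0 s" and eN1: "l2ip \<Omega> (\<psi>t s) (\<psi>t s) = n1 s"
    and eN2: "l2ip \<Omega> (\<psi>tt s) (\<psi>tt s) = n2 s" and eN01: "l2ip \<Omega> (\<psi> s) (\<psi>t s) = n01 s"
    and eN12: "l2ip \<Omega> (\<psi>t s) (\<psi>tt s) = n12 s"
    if "s \<in> {0..T}" for s
    using Hpsi that by (simp_all add: qB n0_def n1_def n2_def n01_def n12_def)
  have eM0: "l2ip \<Omega> (v s) (v s) = m0 s" and eM1: "l2ip \<Omega> (vt s) (vt s) = m1 s"
    and eM01: "l2ip \<Omega> (v s) (vt s) = m01 s"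
    and eX: "l2ip \<Omega> (vtt s) (v s) = m02 s" and eY: "l2ip \<Omega> (vtt s) (vt s) = m12 s"
    if "s \<in> {0..T}" for s
    using Hv that by (simp_all add: qW m0_def m1_def m01_def m02_def m12_def qf_sym[OF GWs, where n=m and x="\<lambda>i. e2 i s"])
  have sqpsi: "sq_int \<Omega> (\<psi> s)" "sq_int \<Omega> (\<psi>t s)" "sq_int \<Omega> (\<psi>tt s)" if "s \<in> {0..T}" for s
    using Hpsi that sq_int_lin_comb[OF A1] by auto
  have sqv: "sq_int \<Omega> (v s)" "sq_int \<Omega> (vt s)" "sq_int \<Omega> (vtt s)" if "s \<in> {0..T}" for s
    using Hv that sq_int_lin_comb[OF sqW] by auto
  have memv: "v s \<in> fspan W" "vt s \<in> fspan W" if "s \<in> {0..T}" for s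
    using Hv that inW by auto
  have mempsi: "\<psi>tt s \<in> fspan B" if "s \<in> {0..T}" for s
    using Hpsi that inB by auto
  have OL: "\<Omega> \<in> sets lebesgue" using borel_open[OF O] by auto
  have SL: "{0<..<T} \<times> \<Omega> \<in> sets lebesgue"
    using borel_open[OF open_Times[OF open_greaterThanLessThan[of 0 T] O]] by auto
  have sec\<alpha>: "AE t in lborel. t \<in> {0<..<T} \<longrightarrow> \<alpha> t \<in> borel_measurable (lebesgue_on \<Omega>)"
    using sec_meas[OF A4 SL OL] by simp
  have secf: "AE t in lborel. t \<in> {0<..<T} \<longrightarrow> f t \<in> borel_measurable (lebesgue_on \<Omega>)"
    using sec_meas[OF A8 SL OL] by simp
  obtain K where iK: "integrable lborel K"
    and secf2: "AE t in lborel. t \<in> {0<..<T} \<longrightarrow> integrable (lebesgue_on \<Omega>) (\<lambda>x. (f t x)^2)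
        \<and> K t = integral\<^sup>L (lebesgue_on \<Omega>) (\<lambda>x. (f t x)^2)"
    using sec_int[OF A9 SL OL] by auto
  have sec\<beta>: "AE t in lborel. AE x in lborel. (t, x) \<in> {0<..<T} \<times> \<Omega> \<longrightarrow> norm (\<beta> t x) \<le> \<beta>up"
    using AE_sec[OF A7 SL] by simp
  have A12L: "AE t in lborel. t \<in> {0<..<T} \<longrightarrow>
           (\<forall>\<phi>\<in>fspan B.
              l2ip \<Omega> (\<lambda>x. (1 + 2 * k * \<alpha> t x) * \<psi>tt t x) \<phi>
              - l2ip \<Omega> (\<lambda>x. c^2 * wdiv \<Omega> (v t) x + b * wdiv \<Omega> (vt t) x) \<phi>
              + 2 * \<sigma> * l2ip \<Omega> (\<lambda>x. inner (\<beta> t x) (vt t x)) \<phi>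
              = l2ip \<Omega> (f t) \<phi>)"
  proof -
    have "AE t in lebesgue. t \<in> {0<..<T} \<longrightarrow>
           (\<forall>\<phi>\<in>fspan B.
              l2ip \<Omega> (\<lambda>x. (1 + 2 * k * \<alpha> t x) * \<psi>tt t x) \<phi>
              - l2ip \<Omega> (\<lambda>x. c^2 * wdiv \<Omega> (v t) x + b * wdiv \<Omega> (vt t) x) \<phi>
              + 2 * \<sigma> * l2ip \<Omega> (\<lambda>x. inner (\<beta> t x) (vt t x)) \<phi>
              = l2ip \<Omega> (f t) \<phi>)"
      using A12 by (subst (asm) AE_restrict_space_iff) (auto elim!: AE_mp)
    then show ?thesis by (simp add: AE_completion_iff)
  qed
  have hyp2: "AE t in lebesgue_on {0<..<T}. \<forall>w\<in>fspan W. l2ip \<Omega> (v t) w + l2ip \<Omega> (\<psi> t) (wdiv \<Omega> w) = 0"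
    using A12 by (rule lebesgue_on_mono) simp
  have D2: "AE s in lebesgue_on {0..T}. \<forall>w\<in>fspan W. l2ip \<Omega> (vtt s) w + l2ip \<Omega> (\<psi>tt s) (wdiv \<Omega> w) = 0"
    by (rule eq2_deriv[OF pars(3) A1 sqW A3 Ha Hpsi He Hv hyp2])
  have D2L: "AE s in lborel. s \<in> {0..T} \<longrightarrow> (\<forall>w\<in>fspan W. l2ip \<Omega> (vtt s) w + l2ip \<Omega> (\<psi>tt s) (wdiv \<Omega> w) = 0)"
  proof -
    have "AE s in lebesgue. s \<in> {0..T} \<longrightarrow> (\<forall>w\<in>fspan W. l2ip \<Omega> (vtt s) w + l2ip \<Omega> (\<psi>tt s) (wdiv \<Omega> w) = 0)"
      using D2 by (subst (asm) AE_restrict_space_iff) auto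
    then show ?thesis by (simp add: AE_completion_iff)
  qed
  define Fs where "Fs s = l2ip \<Omega> (f s) (f s)" for s
  have FsK: "AE s in lborel. s \<in> {0<..<T} \<longrightarrow> Fs s = K s"
    using secf2 by eventually_elim (auto simp: Fs_def l2ip_def power2_eq_square)
  have PWL: "AE s in lborel. s \<in> {0<..<T} \<longrightarrow>
      \<kappa> * n2 s + c^2 * m02 s + b * m12 s \<le> \<kappa> / 2 * n2 s + Kb * m1 s + Fs s / \<kappa>"
    using sec\<alpha> secf secf2 sec\<beta> A12L D2L
  proof eventually_elim
    fix s
    assume m\<alpha>: "s \<in> {0<..<T} \<longrightarrow> \<alpha> s \<in> borel_measurable (lebesgue_on \<Omega>)"
      and mf: "s \<in> {0<..<T} \<longrightarrow> f s \<in> borel_measurable (lebesgue_on \<Omega>)"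
      and if2: "s \<in> {0<..<T} \<longrightarrow> integrable (lebesgue_on \<Omega>) (\<lambda>x. (f s x)^2) \<and> K s = integral\<^sup>L (lebesgue_on \<Omega>) (\<lambda>x. (f s x)^2)"
      and b\<beta>: "AE x in lborel. (s, x) \<in> {0<..<T} \<times> \<Omega> \<longrightarrow> norm (\<beta> s x) \<le> \<beta>up"
      and e1: "s \<in> {0<..<T} \<longrightarrow>
           (\<forall>\<phi>\<in>fspan B.
              l2ip \<Omega> (\<lambda>x. (1 + 2 * k * \<alpha> s x) * \<psi>tt s x) \<phi>
              - l2ip \<Omega> (\<lambda>x. c^2 * wdiv \<Omega> (v s) x + b * wdiv \<Omega> (vt s) x) \<phi>
              + 2 * \<sigma> * l2ip \<Omega> (\<lambda>x. inner (\<beta> s x) (vt s x)) \<phi>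
              = l2ip \<Omega> (f s) \<phi>)"
      and e2: "s \<in> {0..T} \<longrightarrow> (\<forall>w\<in>fspan W. l2ip \<Omega> (vtt s) w + l2ip \<Omega> (\<psi>tt s) (wdiv \<Omega> w) = 0)"
    show "s \<in> {0<..<T} \<longrightarrow> \<kappa> * n2 s + c^2 * m02 s + b * m12 s \<le> \<kappa> / 2 * n2 s + Kb * m1 s + Fs s / \<kappa>"
    proof
      assume s: "s \<in> {0<..<T}"
      then have s': "s \<in> {0..T}" by auto
      have sqf: "sq_int \<Omega> (f s)" using mf if2 s by (simp add: sq_int_def)
      have b\<beta>': "AE x in lebesgue_on \<Omega>. norm (\<beta> s x) \<le> \<beta>up"
      proof -
        have "AE x in lebesgue. (s, x) \<in> {0<..<T} \<times> \<Omega> \<longrightarrow> norm (\<beta> s x) \<le> \<beta>up"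
          using b\<beta> by (rule AE_completion)
        then have "AE x in lebesgue. x \<in> \<Omega> \<longrightarrow> norm (\<beta> s x) \<le> \<beta>up"
          by eventually_elim (use s in auto)
        then show ?thesis using OL by (subst AE_restrict_space_iff) auto
      qed
      have "\<kappa> * l2ip \<Omega> (\<psi>tt s) (\<psi>tt s) + c^2 * l2ip \<Omega> (vtt s) (v s) + b * l2ip \<Omega> (vtt s) (vt s)
         \<le> \<kappa> / 2 * l2ip \<Omega> (\<psi>tt s) (\<psi>tt s) + (4 * \<sigma>^2 * \<beta>up^2 / \<kappa>) * l2ip \<Omega> (vt s) (vt s) + l2ip \<Omega> (f s) (f s) / \<kappa>"
      proof (rule pointwise_ineq[where Aup = "1 + 2 * \<bar>k\<bar> * \<alpha>up" and B = B and W = W])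
        show "\<kappa> > 0" by (rule kap)
        show "\<forall>x\<in>\<Omega>. \<kappa> \<le> 1 + 2 * k * \<alpha> s x \<and> 1 + 2 * k * \<alpha> s x \<le> 1 + 2 * \<bar>k\<bar> * \<alpha>up"
          using A6 s unfolding \<kappa>_def by blast
        show "\<alpha> s \<in> borel_measurable (lebesgue_on \<Omega>)" using m\<alpha> s by simp
        show "AE x in lebesgue_on \<Omega>. norm (\<beta> s x) \<le> \<beta>up" by (rule b\<beta>')
        show "sq_int \<Omega> (f s)" by (rule sqf)
        show "sq_int \<Omega> (\<psi>tt s)" using sqpsi s' by auto
        show "sq_int \<Omega> (v s)" "sq_int \<Omega> (vt s)" "sq_int \<Omega> (vtt s)" using sqv s' by auto
        show "sq_int \<Omega> (wdiv \<Omega> (v s))" "sq_int \<Omega> (wdiv \<Omega> (vt s))"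
          using wdiv_props(2) A3 memv[OF s'] by blast+
        show "\<psi>tt s \<in> fspan B" by (rule mempsi[OF s'])
        show "v s \<in> fspan W" "vt s \<in> fspan W" using memv[OF s'] by auto
        show "\<forall>\<phi>\<in>fspan B.
              l2ip \<Omega> (\<lambda>x. (1 + 2 * k * \<alpha> s x) * \<psi>tt s x) \<phi>
              - l2ip \<Omega> (\<lambda>x. c^2 * wdiv \<Omega> (v s) x + b * wdiv \<Omega> (vt s) x) \<phi>
              + 2 * \<sigma> * l2ip \<Omega> (\<lambda>x. inner (\<beta> s x) (vt s x)) \<phi>
              = l2ip \<Omega> (f s) \<phi>" using e1 s by blast
        show "\<forall>w\<in>fspan W. l2ip \<Omega> (vtt s) w + l2ip \<Omega> (\<psi>tt s) (wdiv \<Omega> w) = 0" using e2 s' by blast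
      qed
      then show "\<kappa> * n2 s + c^2 * m02 s + b * m12 s \<le> \<kappa> / 2 * n2 s + Kb * m1 s + Fs s / \<kappa>"
        using eN2[OF s'] eX[OF s'] eY[OF s'] eM1[OF s'] by (simp add: Kb_def Fs_def)
    qed
  qed
  have ac_cd: "ac T p q'" if "ac T p p'" "\<And>t. t \<in> {0..T} \<Longrightarrow> p' t = q' t" for p p' q'
    using ac_cong[OF that(1) _ that(2) T0] by simp
  have symB: "qf GB n x y = qf GB n y x" for x y by (rule qf_sym[OF GBs])
  have symW: "qf GW m x y = qf GW m y x" for x y by (rule qf_sym[OF GWs])
  have ac_n0: "ac T n0 (\<lambda>s. 2 * n01 s)"
  proof -
    have "ac T n0 (\<lambda>s. qf GB n (\<lambda>i. a1 i s) (\<lambda>i. a i s) + qf GB n (\<lambda>i. a i s) (\<lambda>i. a1 i s))"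
      unfolding n0_def by (rule ac_qf) (auto intro: acA)
    then show ?thesis by (rule ac_cd) (simp add: n01_def symB[of "\<lambda>i. a1 i _"])
  qed
  have ac_n1: "ac T n1 (\<lambda>s. 2 * n12 s)"
  proof -
    have "ac T n1 (\<lambda>s. qf GB n (\<lambda>i. a2 i s) (\<lambda>i. a1 i s) + qf GB n (\<lambda>i. a1 i s) (\<lambda>i. a2 i s))"
      unfolding n1_def by (rule ac_qf) (auto intro: acA)
    then show ?thesis by (rule ac_cd) (simp add: n12_def symB[of "\<lambda>i. a2 i _"])
  qed
  have ac_m0: "ac T m0 (\<lambda>s. 2 * m01 s)"
  proof -
    have "ac T m0 (\<lambda>s. qf GW m (\<lambda>i. e1 i s) (\<lambda>i. e i s) + qf GW m (\<lambda>i. e i s) (\<lambda>i. e1 i s))"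
      unfolding m0_def by (rule ac_qf) (auto intro: acE)
    then show ?thesis by (rule ac_cd) (simp add: m01_def symW[of "\<lambda>i. e1 i _"])
  qed
  have ac_m1: "ac T m1 (\<lambda>s. 2 * m12 s)"
  proof -
    have "ac T m1 (\<lambda>s. qf GW m (\<lambda>i. e2 i s) (\<lambda>i. e1 i s) + qf GW m (\<lambda>i. e1 i s) (\<lambda>i. e2 i s))"
      unfolding m1_def by (rule ac_qf) (auto intro: acE)
    then show ?thesis by (rule ac_cd) (simp add: m12_def symW[of "\<lambda>i. e2 i _"])
  qed
  have ac_m01: "ac T m01 (\<lambda>s. m1 s + m02 s)"
    unfolding m01_def m1_def m02_def by (rule ac_qf) (auto intro: acE)
  have ac_Psi: "ac T (\<lambda>s. b/2 * m1 s + c^2 * m01 s) (\<lambda>s. b * m12 s + c^2 * (m1 s + m02 s))"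
    by (rule ac_cd[OF ac_add[OF ac_cmult[OF ac_m1, of "b/2"] ac_cmult[OF ac_m01, of "c^2"]]]) simp
  have nn: "0 \<le> n0 s" "0 \<le> n1 s" "0 \<le> n2 s" "0 \<le> m0 s" "0 \<le> m1 s" if "s \<in> {0..T}" for s
    using eN0[OF that] eN1[OF that] eN2[OF that] eM0[OF that] eM1[OF that] l2ip_self_nonneg by metis+
  have Fs0: "0 \<le> Fs s" for s unfolding Fs_def by (rule l2ip_self_nonneg)
  have yN01: "2 * n01 s \<le> n0 s + n1 s" if "s \<in> {0..T}" for s
    using l2ip_young[OF sqpsi(1)[OF that] sqpsi(2)[OF that], of 1] eN0[OF that] eN1[OF that] eN01[OF that] by simp
  have yN12: "2 * n12 s \<le> n1 s + n2 s" if "s \<in> {0..T}" for s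
    using l2ip_young[OF sqpsi(2)[OF that] sqpsi(3)[OF that], of 1] eN1[OF that] eN2[OF that] eN12[OF that] by simp
  have yM01: "\<bar>m01 s\<bar> \<le> (m0 s + m1 s) / 2" if "s \<in> {0..T}" for s
    using l2ip_young[OF sqv(1)[OF that] sqv(2)[OF that], of 1] eM0[OF that] eM1[OF that] eM01[OF that] by simp
  have yM01c: "c^2 * \<bar>m01 s\<bar> \<le> b/4 * m1 s + c^4/b * m0 s" if "s \<in> {0..T}" for s
  proof -
    have "\<bar>m01 s\<bar> \<le> ((2 * c^2 / b) * m0 s + m1 s / (2 * c^2 / b)) / 2"
      using l2ip_young[OF sqv(1)[OF that] sqv(2)[OF that], of "2 * c^2 / b"] eM0[OF that] eM1[OF that] eM01[OF that] pars
      by simp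
    then have "c^2 * \<bar>m01 s\<bar> \<le> c^2 * (((2 * c^2 / b) * m0 s + m1 s / (2 * c^2 / b)) / 2)"
      by (rule mult_left_mono) simp
    also have "\<dots> = b/4 * m1 s + c^4/b * m0 s" using pars by (simp add: field_simps power2_eq_square power4_eq_xxxx)
    finally show ?thesis .
  qed
  have cn0: "continuous_on {0..T} n0" by (rule ac_cont[OF ac_n0])
  have cn1: "continuous_on {0..T} n1" by (rule ac_cont[OF ac_n1])
  have cm0: "continuous_on {0..T} m0" by (rule ac_cont[OF ac_m0])
  have cm1: "continuous_on {0..T} m1" by (rule ac_cont[OF ac_m1])
  have cm01: "continuous_on {0..T} m01" by (rule ac_cont[OF ac_m01])
  have cn01: "continuous_on {0..T} n01"
  proof -
    have "ac T n01 (\<lambda>s. qf GB n (\<lambda>i. a1 i s) (\<lambda>i. a1 i s) + qf GB n (\<lambda>i. a i s) (\<lambda>i. a2 i s))"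
      unfolding n01_def by (rule ac_qf) (auto intro: acA)
    then show ?thesis by (rule ac_cont)
  qed
  have i_n2: "integrable (lebesgue_on {0..T}) n2"
    unfolding n2_def
  proof (rule integrable_qf)
    fix i j assume i: "i < n" and j: "j < n"
    show "integrable (lebesgue_on {0..T}) (\<lambda>s. a2 i s * a2 j s)"
      using Ha i j unfolding n_def H2_scalar_def by (intro integrable_prod_sq) auto
  qed
  have i_n12: "integrable (lebesgue_on {0..T}) n12"
    using ac_int[OF ac_n1] by simp
  have i_m12: "integrable (lebesgue_on {0..T}) m12"
    using ac_int[OF ac_m1] by simp
  have i_m02: "integrable (lebesgue_on {0..T}) m02"
  proof -
    have "integrable (lebesgue_on {0..T}) (\<lambda>s. m1 s + m02 s)" by (rule ac_int[OF ac_m01])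
    moreover have "integrable (lebesgue_on {0..T}) m1" by (rule continuous_imp_integrable_real[OF cm1])
    ultimately have "integrable (lebesgue_on {0..T}) (\<lambda>s. (m1 s + m02 s) - m1 s)"
      by (rule Bochner_Integration.integrable_diff)
    then show ?thesis by simp
  qed
  have sub: "integrable (lebesgue_on {0..t}) g" if "integrable (lebesgue_on {0..T}) g" "t \<in> {0..T}" for g :: "real \<Rightarrow> real" and t
    using that by (intro Equivalence_Lebesgue_Henstock_Integration.integrable_subinterval[OF that(1)]) auto
  have icont: "integrable (lebesgue_on {0..T}) g" if "continuous_on {0..T} g" for g :: "real \<Rightarrow> real"
    by (rule continuous_imp_integrable_real[OF that])
  have i_Fs: "integrable (lebesgue_on {0..t}) Fs" if "t \<in> {0..T}" for t
    using integrable_via_K[OF iK FsK, of 0 t] that by auto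
  define Z where "Z t = integral\<^sup>L (lebesgue_on {0..t}) n2" for t
  define Fi where "Fi t = integral\<^sup>L (lebesgue_on {0..t}) Fs" for t
  have cZ: "continuous_on {0..T} Z"
    unfolding Z_def by (rule indefinite_integral_continuous_real[OF i_n2])
  have Z0: "Z 0 = 0" unfolding Z_def by (rule integral_eq_zero_null_sets) auto
  have Znn: "0 \<le> Z t" if "t \<in> {0..T}" for t
    unfolding Z_def by (rule integral_nonneg_AE) (rule AE_I2, use nn(3) that in auto)
  define K2 where "K2 = b/2 + c^2/2 + c^4/b + Kb + c^2 + 1/\<kappa>"
  define K3 where "K3 = 3 + 4 * K2 / \<kappa> + 4 * K2 / b"
  have K2pos: "K2 > 0" using pars kap Kb0 unfolding K2_def by (intro add_pos_nonneg add_nonneg_pos) auto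
  have K3pos: "K3 > 0" using K2pos pars kap unfolding K3_def by (intro add_pos_pos) auto
  define E0 where "E0 = n0 0 + n1 0 + m0 0 + m1 0"
  define Ec where "Ec s = n0 s + n1 s + Z s + m0 s + m1 s" for s
  have cEc: "continuous_on {0..T} Ec"
    unfolding Ec_def by (intro continuous_on_add cn0 cn1 cZ cm0 cm1)
  have E0nn: "0 \<le> E0" using nn[of 0] pars by (simp add: E0_def)
  have key: "Ec t \<le> K3 * (E0 + Fi t) + K3 * integral\<^sup>L (lebesgue_on {0..t}) Ec" if t: "t \<in> {0..T}" for t
  proof -
    have sT: "{0..t} \<subseteq> {0..T}" using t by auto
    have nnt: "0 \<le> n0 s" "0 \<le> n1 s" "0 \<le> n2 s" "0 \<le> m0 s" "0 \<le> m1 s" if "s \<in> {0..t}" for s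
      using nn that sT by auto
    define I0 where "I0 = integral\<^sup>L (lebesgue_on {0..t}) n0"
    define I1 where "I1 = integral\<^sup>L (lebesgue_on {0..t}) n1"
    define J0 where "J0 = integral\<^sup>L (lebesgue_on {0..t}) m0"
    define J1 where "J1 = integral\<^sup>L (lebesgue_on {0..t}) m1"
    have in0: "integrable (lebesgue_on {0..t}) n0" by (rule sub[OF icont[OF cn0] t])
    have in1: "integrable (lebesgue_on {0..t}) n1" by (rule sub[OF icont[OF cn1] t])
    have im0: "integrable (lebesgue_on {0..t}) m0" by (rule sub[OF icont[OF cm0] t])
    have im1: "integrable (lebesgue_on {0..t}) m1" by (rule sub[OF icont[OF cm1] t])
    have in2: "integrable (lebesgue_on {0..t}) n2" by (rule sub[OF i_n2 t])
    have iZ: "integrable (lebesgue_on {0..t}) Z" by (rule sub[OF icont[OF cZ] t])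
    have in01: "integrable (lebesgue_on {0..t}) n01" by (rule sub[OF icont[OF cn01] t])
    have im01: "integrable (lebesgue_on {0..t}) m01" by (rule sub[OF icont[OF cm01] t])
    have in12: "integrable (lebesgue_on {0..t}) n12" by (rule sub[OF i_n12 t])
    have im12: "integrable (lebesgue_on {0..t}) m12" by (rule sub[OF i_m12 t])
    have im02: "integrable (lebesgue_on {0..t}) m02" by (rule sub[OF i_m02 t])
    have iF: "integrable (lebesgue_on {0..t}) Fs" by (rule i_Fs[OF t])
    have nnI: "0 \<le> I0" "0 \<le> I1" "0 \<le> J0" "0 \<le> J1" "0 \<le> Fi t"
      unfolding I0_def I1_def J0_def J1_def Fi_def
      by (rule integral_nonneg_AE, rule AE_I2, use nnt Fs0 in auto)+
    have ae: "AE s in lebesgue_on {0..t}. \<kappa>/2 * n2 s + (b * m12 s + c^2 * (m1 s + m02 s)) \<le> (Kb + c^2) * m1 s + Fs s / \<kappa>"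
    proof -
      have "AE s in lebesgue_on {0..t}. \<kappa> * n2 s + c^2 * m02 s + b * m12 s \<le> \<kappa> / 2 * n2 s + Kb * m1 s + Fs s / \<kappa>"
        using AE_lborel_to_on[OF PWL, of 0 t] t by simp
      then show ?thesis
      proof (rule lebesgue_on_mono)
        fix s assume "\<kappa> * n2 s + c^2 * m02 s + b * m12 s \<le> \<kappa> / 2 * n2 s + Kb * m1 s + Fs s / \<kappa>"
        then show "\<kappa>/2 * n2 s + (b * m12 s + c^2 * (m1 s + m02 s)) \<le> (Kb + c^2) * m1 s + Fs s / \<kappa>"
          by (simp add: algebra_simps)
      qed
    qed
    have "integral\<^sup>L (lebesgue_on {0..t}) (\<lambda>s. \<kappa>/2 * n2 s + (b * m12 s + c^2 * (m1 s + m02 s)))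
        \<le> integral\<^sup>L (lebesgue_on {0..t}) (\<lambda>s. (Kb + c^2) * m1 s + Fs s / \<kappa>)"
      by (rule integral_mono_AE[OF _ _ ae]) (use in2 im12 im1 im02 iF in simp_all)
    moreover have "integral\<^sup>L (lebesgue_on {0..t}) (\<lambda>s. \<kappa>/2 * n2 s + (b * m12 s + c^2 * (m1 s + m02 s)))
        = \<kappa>/2 * Z t + integral\<^sup>L (lebesgue_on {0..t}) (\<lambda>s. b * m12 s + c^2 * (m1 s + m02 s))"
      unfolding Z_def using in2 im12 im1 im02 by (simp add: Bochner_Integration.integral_add)
    moreover have "integral\<^sup>L (lebesgue_on {0..t}) (\<lambda>s. b * m12 s + c^2 * (m1 s + m02 s))
        = (b/2 * m1 t + c^2 * m01 t) - (b/2 * m1 0 + c^2 * m01 0)"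
      using ac_eq[OF ac_Psi t] by simp
    moreover have "integral\<^sup>L (lebesgue_on {0..t}) (\<lambda>s. (Kb + c^2) * m1 s + Fs s / \<kappa>) = (Kb + c^2) * J1 + Fi t / \<kappa>"
      unfolding J1_def Fi_def using im1 iF by (simp add: Bochner_Integration.integral_add)
    ultimately have h1: "\<kappa>/2 * Z t + (b/2 * m1 t + c^2 * m01 t) - (b/2 * m1 0 + c^2 * m01 0) \<le> (Kb + c^2) * J1 + Fi t / \<kappa>"
      by linarith
    have h2: "c^2 * \<bar>m01 t\<bar> \<le> b/4 * m1 t + c^4/b * m0 t" by (rule yM01c[OF t])
    have h3: "c^2 * \<bar>m01 0\<bar> \<le> c^2/2 * (m0 0 + m1 0)"
      using mult_left_mono[OF yM01[of 0], of "c^2"] pars by simp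
    have h4: "m0 t \<le> m0 0 + J0 + J1"
    proof -
      have "integral\<^sup>L (lebesgue_on {0..t}) (\<lambda>s. 2 * m01 s) \<le> integral\<^sup>L (lebesgue_on {0..t}) (\<lambda>s. m0 s + m1 s)"
      proof (rule integral_mono)
        show "integrable (lebesgue_on {0..t}) (\<lambda>s. 2 * m01 s)" using im01 by simp
        show "integrable (lebesgue_on {0..t}) (\<lambda>s. m0 s + m1 s)" using im0 im1 by simp
        fix s assume "s \<in> space (lebesgue_on {0..t})"
        then have "s \<in> {0..T}" using sT by auto
        then show "2 * m01 s \<le> m0 s + m1 s" using yM01 by fastforce
      qed
      then show ?thesis using ac_eq[OF ac_m0 t] im0 im1
        by (simp add: J0_def J1_def Bochner_Integration.integral_add)
    qed
    have h5: "n0 t \<le> n0 0 + I0 + I1"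
    proof -
      have "integral\<^sup>L (lebesgue_on {0..t}) (\<lambda>s. 2 * n01 s) \<le> integral\<^sup>L (lebesgue_on {0..t}) (\<lambda>s. n0 s + n1 s)"
      proof (rule integral_mono)
        show "integrable (lebesgue_on {0..t}) (\<lambda>s. 2 * n01 s)" using in01 by simp
        show "integrable (lebesgue_on {0..t}) (\<lambda>s. n0 s + n1 s)" using in0 in1 by simp
        fix s assume "s \<in> space (lebesgue_on {0..t})"
        then have "s \<in> {0..T}" using sT by auto
        then show "2 * n01 s \<le> n0 s + n1 s" by (rule yN01)
      qed
      then show ?thesis using ac_eq[OF ac_n0 t] in0 in1
        by (simp add: I0_def I1_def Bochner_Integration.integral_add)
    qed
    have h6: "n1 t \<le> n1 0 + I1 + Z t"
    proof -
      have "integral\<^sup>L (lebesgue_on {0..t}) (\<lambda>s. 2 * n12 s) \<le> integral\<^sup>L (lebesgue_on {0..t}) (\<lambda>s. n1 s + n2 s)"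
      proof (rule integral_mono)
        show "integrable (lebesgue_on {0..t}) (\<lambda>s. 2 * n12 s)" using in12 by simp
        show "integrable (lebesgue_on {0..t}) (\<lambda>s. n1 s + n2 s)" using in1 in2 by simp
        fix s assume "s \<in> space (lebesgue_on {0..t})"
        then have "s \<in> {0..T}" using sT by auto
        then show "2 * n12 s \<le> n1 s + n2 s" by (rule yN12)
      qed
      then show ?thesis using ac_eq[OF ac_n1 t] in1 in2
        by (simp add: I1_def Z_def Bochner_Integration.integral_add)
    qed
    have fa: "n0 t + n1 t + Z t + m0 t + m1 t \<le> K3 * ((n0 0 + n1 0 + m0 0 + m1 0) + Fi t) + K3 * (I0 + I1 + J0 + J1)"
      unfolding K3_def K2_def
      by (rule final_algebra[OF pars(1) kap Kb0 nn(1)[OF t] nn(2)[OF t] nn(4)[OF t] nn(5)[OF t] Znn[OF t] nnI(5)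
            nn(1)[of 0] nn(2)[of 0] nn(4)[of 0] nn(5)[of 0] nnI(1) nnI(2) nnI(3) nnI(4) h1 h2 h3 h4 h5 h6])
         (use T0 in auto)
    have "integral\<^sup>L (lebesgue_on {0..t}) Ec = I0 + I1 + integral\<^sup>L (lebesgue_on {0..t}) Z + J0 + J1"
      unfolding Ec_def I0_def I1_def J0_def J1_def using in0 in1 iZ im0 im1
      by (simp add: Bochner_Integration.integral_add)
    moreover have "0 \<le> integral\<^sup>L (lebesgue_on {0..t}) Z"
      by (rule integral_nonneg_AE) (rule AE_I2, use Znn sT in auto)
    ultimately have "I0 + I1 + J0 + J1 \<le> integral\<^sup>L (lebesgue_on {0..t}) Ec" by linarith
    then have "K3 * (I0 + I1 + J0 + J1) \<le> K3 * integral\<^sup>L (lebesgue_on {0..t}) Ec"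
      using K3pos by simp
    then show ?thesis using fa unfolding Ec_def E0_def by linarith
  qed
  have monoF: "K3 * (E0 + Fi s) \<le> K3 * (E0 + Fi t)" if "0 \<le> s" "s \<le> t" "t \<le> T" for s t
  proof -
    have "Fi s \<le> Fi t"
      unfolding Fi_def
      by (rule integral_mono_lebesgue_on_AE[OF i_Fs]) (use that Fs0 in auto)
    then show ?thesis using K3pos by simp
  qed
  have enE: "energy \<Omega> \<psi> \<psi>t \<psi>tt v vt s = Ec s" if s: "s \<in> {0..T}" for s
  proof -
    have "integral\<^sup>L (lebesgue_on {0..s}) (\<lambda>r. l2ip \<Omega> (\<psi>tt r) (\<psi>tt r)) = Z s"
      unfolding Z_def by (rule Bochner_Integration.integral_cong) (use eN2 s in auto)
    then show ?thesis unfolding energy_def Ec_def using eN0[OF s] eN1[OF s] eM0[OF s] eM1[OF s] by simp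
  qed
  have CK: "Cst b c (1 - 2 * \<bar>k\<bar> * \<alpha>lo) \<sigma> \<beta>up T = K3 * exp (K3 * T)"
    unfolding Cst_def K3_def K2_def Kb_def \<kappa>_def by simp
  show ?thesis
  proof
    fix t assume t: "t \<in> {0..T}"
    have "Ec t \<le> K3 * (E0 + Fi t) * exp (K3 * t)"
      by (rule gronwall[OF cEc K3pos monoF key t]) auto
    also have "\<dots> \<le> K3 * (E0 + Fi t) * exp (K3 * T)"
    proof (rule mult_left_mono)
      show "exp (K3 * t) \<le> exp (K3 * T)" using t K3pos by (simp add: mult_left_mono)
      have "0 \<le> Fi t" unfolding Fi_def by (rule integral_nonneg_AE) (rule AE_I2, use Fs0 in auto)
      then show "0 \<le> K3 * (E0 + Fi t)" using K3pos E0nn by simp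
    qed
    finally have "Ec t \<le> K3 * exp (K3 * T) * (E0 + Fi t)" by (simp add: algebra_simps)
    moreover have "energy \<Omega> \<psi> \<psi>t \<psi>tt v vt 0 = E0"
      using enE[of 0] T0 Z0 by (simp add: Ec_def E0_def)
    ultimately show "energy \<Omega> \<psi> \<psi>t \<psi>tt v vt t
              \<le> Cst b c (1 - 2 * \<bar>k\<bar> * \<alpha>lo) \<sigma> \<beta>up T * (energy \<Omega> \<psi> \<psi>t \<psi>tt v vt 0
                     + integral\<^sup>L (lebesgue_on {0..t}) (\<lambda>s. l2ip \<Omega> (f s) (f s)))"
      using enE[OF t] CK by (simp add: Fi_def Fs_def[abs_def])
  qed
qed


theorem proposition3p1:
  fixes \<Omega> :: "(real^'d) set"
    and b c k \<sigma> T \<alpha>lo \<alpha>up \<beta>up :: real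
  assumes dim: "CARD('d) = 2 \<or> CARD('d) = 3"
    and dom: "open \<Omega>" "bounded \<Omega>" "convex \<Omega>" "\<Omega> \<noteq> {}" "polytope (closure \<Omega>)"
    and pars: "b > 0" "c > 0" "T > 0"
    and K1const: "\<alpha>lo > 0" "\<alpha>up > 0" "\<beta>up > 0" "1 - 2 * \<bar>k\<bar> * \<alpha>lo > 0"
  shows "\<exists>C>0. \<forall>(B :: (real^'d \<Rightarrow> real) list) (W :: (real^'d \<Rightarrow> real^'d) list)
            (\<alpha> :: real \<Rightarrow> real^'d \<Rightarrow> real) (\<beta> :: real \<Rightarrow> real^'d \<Rightarrow> real^'d)
            (f :: real \<Rightarrow> real^'d \<Rightarrow> real)
            (\<psi> :: real \<Rightarrow> real^'d \<Rightarrow> real) \<psi>t \<psi>tt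
            (v :: real \<Rightarrow> real^'d \<Rightarrow> real^'d) vt vtt.
      \<comment> \<open>finite-dimensional conforming mixed spaces Psi_h = span B, V_h = span W, div V_h in Psi_h\<close>
      (\<forall>q\<in>set B. sq_int \<Omega> q) \<and> (\<forall>w\<in>set W. Hdiv \<Omega> w)
      \<and> (\<forall>w\<in>fspan W. \<exists>g\<in>fspan B. has_weak_div \<Omega> w g)
      \<comment> \<open>Assumption (K1), with measurable coefficients\<close>
      \<and> (\<lambda>(t,x). \<alpha> t x) \<in> borel_measurable (lebesgue_on ({0<..<T} \<times> \<Omega>))
      \<and> (\<lambda>(t,x). \<beta> t x) \<in> borel_measurable (lebesgue_on ({0<..<T} \<times> \<Omega>))
      \<and> (\<forall>t\<in>{0<..<T}. \<forall>x\<in>\<Omega>. 1 - 2 * \<bar>k\<bar> * \<alpha>lo \<le> 1 + 2 * k * \<alpha> t x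
                              \<and> 1 + 2 * k * \<alpha> t x \<le> 1 + 2 * \<bar>k\<bar> * \<alpha>up)
      \<and> (AE z in lebesgue_on ({0<..<T} \<times> \<Omega>). norm ((\<lambda>(t,x). \<beta> t x) z) \<le> \<beta>up)
      \<comment> \<open>f in L2(0,T;L2(Omega))\<close>
      \<and> (\<lambda>(t,x). f t x) \<in> borel_measurable (lebesgue_on ({0<..<T} \<times> \<Omega>))
      \<and> integrable (lebesgue_on ({0<..<T} \<times> \<Omega>)) (\<lambda>(t,x). (f t x)^2)
      \<comment> \<open>regularity of the solution\<close>
      \<and> H2_time B T \<psi> \<psi>t \<psi>tt \<and> H2_time W T v vt vtt
      \<comment> \<open>the semi-discrete equations (LK) for a.e. t\<close>
      \<and> (AE t in lebesgue_on {0<..<T}.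
           (\<forall>\<phi>\<in>fspan B.
              l2ip \<Omega> (\<lambda>x. (1 + 2 * k * \<alpha> t x) * \<psi>tt t x) \<phi>
              - l2ip \<Omega> (\<lambda>x. c^2 * wdiv \<Omega> (v t) x + b * wdiv \<Omega> (vt t) x) \<phi>
              + 2 * \<sigma> * l2ip \<Omega> (\<lambda>x. inner (\<beta> t x) (vt t x)) \<phi>
              = l2ip \<Omega> (f t) \<phi>)
           \<and> (\<forall>w\<in>fspan W. l2ip \<Omega> (v t) w + l2ip \<Omega> (\<psi> t) (wdiv \<Omega> w) = 0))
      \<comment> \<open>initial velocities v_0h, v_1h determined by psi_0h = psi(0), psi_1h = psi_t(0)\<close>
      \<and> (\<forall>w\<in>fspan W. l2ip \<Omega> (v 0) w + l2ip \<Omega> (\<psi> 0) (wdiv \<Omega> w) = 0)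
      \<and> (\<forall>w\<in>fspan W. l2ip \<Omega> (vt 0) w + l2ip \<Omega> (\<psi>t 0) (wdiv \<Omega> w) = 0)
      \<longrightarrow> (\<forall>t\<in>{0..T}. energy \<Omega> \<psi> \<psi>t \<psi>tt v vt t
              \<le> C * (energy \<Omega> \<psi> \<psi>t \<psi>tt v vt 0
                     + integral\<^sup>L (lebesgue_on {0..t}) (\<lambda>s. l2ip \<Omega> (f s) (f s))))"
proof -
  show ?thesis
  proof (rule exI[of _ "Cst b c (1 - 2 * \<bar>k\<bar> * \<alpha>lo) \<sigma> \<beta>up T"], intro conjI allI impI)
    show "Cst b c (1 - 2 * \<bar>k\<bar> * \<alpha>lo) \<sigma> \<beta>up T > 0"
      by (rule Cst_pos) (use pars K1const in auto)
  next
    fix B W \<alpha> \<beta> f \<psi> \<psi>t \<psi>tt v vt vtt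
    assume H: "(\<forall>q\<in>set B. sq_int \<Omega> q) \<and> (\<forall>w\<in>set W. Hdiv \<Omega> w)
      \<and> (\<forall>w\<in>fspan W. \<exists>g\<in>fspan B. has_weak_div \<Omega> w g)
      \<and> (\<lambda>(t,x). \<alpha> t x) \<in> borel_measurable (lebesgue_on ({0<..<T} \<times> \<Omega>))
      \<and> (\<lambda>(t,x). \<beta> t x) \<in> borel_measurable (lebesgue_on ({0<..<T} \<times> \<Omega>))
      \<and> (\<forall>t\<in>{0<..<T}. \<forall>x\<in>\<Omega>. 1 - 2 * \<bar>k\<bar> * \<alpha>lo \<le> 1 + 2 * k * \<alpha> t x
                              \<and> 1 + 2 * k * \<alpha> t x \<le> 1 + 2 * \<bar>k\<bar> * \<alpha>up)
      \<and> (AE z in lebesgue_on ({0<..<T} \<times> \<Omega>). norm ((\<lambda>(t,x). \<beta> t x) z) \<le> \<beta>up)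
      \<and> (\<lambda>(t,x). f t x) \<in> borel_measurable (lebesgue_on ({0<..<T} \<times> \<Omega>))
      \<and> integrable (lebesgue_on ({0<..<T} \<times> \<Omega>)) (\<lambda>(t,x). (f t x)^2)
      \<and> H2_time B T \<psi> \<psi>t \<psi>tt \<and> H2_time W T v vt vtt
      \<and> (AE t in lebesgue_on {0<..<T}.
           (\<forall>\<phi>\<in>fspan B.
              l2ip \<Omega> (\<lambda>x. (1 + 2 * k * \<alpha> t x) * \<psi>tt t x) \<phi>
              - l2ip \<Omega> (\<lambda>x. c^2 * wdiv \<Omega> (v t) x + b * wdiv \<Omega> (vt t) x) \<phi>
              + 2 * \<sigma> * l2ip \<Omega> (\<lambda>x. inner (\<beta> t x) (vt t x)) \<phi>
              = l2ip \<Omega> (f t) \<phi>)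
           \<and> (\<forall>w\<in>fspan W. l2ip \<Omega> (v t) w + l2ip \<Omega> (\<psi> t) (wdiv \<Omega> w) = 0))
      \<and> (\<forall>w\<in>fspan W. l2ip \<Omega> (v 0) w + l2ip \<Omega> (\<psi> 0) (wdiv \<Omega> w) = 0)
      \<and> (\<forall>w\<in>fspan W. l2ip \<Omega> (vt 0) w + l2ip \<Omega> (\<psi>t 0) (wdiv \<Omega> w) = 0)"
    show "\<forall>t\<in>{0..T}. energy \<Omega> \<psi> \<psi>t \<psi>tt v vt t
              \<le> Cst b c (1 - 2 * \<bar>k\<bar> * \<alpha>lo) \<sigma> \<beta>up T * (energy \<Omega> \<psi> \<psi>t \<psi>tt v vt 0
                     + integral\<^sup>L (lebesgue_on {0..t}) (\<lambda>s. l2ip \<Omega> (f s) (f s)))"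
      using H by (elim conjE) (rule main_est[OF dom(1) pars K1const(4)]; assumption)
  qed
qed

end
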